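(* Let $X,Y$ be compact metric spaces with metrics $d,d'$, and let $f\colon X\to X$, $g\colon Y\to Y$ be continuous maps. Let $C\in\mathcal{C}(f)$, $D\in\mathcal{D}(C)$, $C'\in\mathcal{C}(g)$, and let $h\colon C\to C'$ be a homeomorphism with $h\circ f|_C=g|_{C'}\circ h$ (then $h(D)\in\mathcal{D}(C')$). Let $\mathcal{F},\mathcal{G}$ be full Furstenberg families, $n\ge2$ and $\delta>0$. If $g$ has the s-limit shadowing property and $V^s(D)$ is dense $(\mathcal{F},\mathcal{G})$-$n$-$\delta$-chaotic for $f$, then there is $\delta'>0$ such that $V^s(h(D))$ is dense $(\mathcal{F},\mathcal{G})$-$n$-$\delta'$-chaotic for $g$.
   Context: The following is defined for any continuous self-map $f$ of a compact metric space $(X,d)$ (and analogously for $g$ on $(Y,d')$). A $\delta$-chain of $f$ ($\delta>0$) is a finite sequence $(x_i)_{i=0}^k$, $k\ge1$, with $d(f(x_i),x_{i+1})\le\delta$ for $0\le i\le k-1$; it is a $\delta$-cycle if $x_0=x_k$, with length $k$. Write $x\to y$ if for every $\delta>0$ there is a $\delta$-chain from $x$ to $y$. Let $CR(f)=\{x\colon x\to x\}$; on $CR(f)$ let $x\leftrightarrow y$ iff $x\to y$ and $y\to x$; its classes are the chain components, forming $\mathcal{C}(f)$. For $C\in\mathcal{C}(f)$, $\delta>0$, let $m=m(C,\delta)$ be the gcd of the lengths of all $\delta$-cycles of $f|_C$, and for $x,y\in C$ let $x\sim_{C,\delta}y$ iff there is a $\delta$-chain of $f|_C$ from $x$ to $y$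 of length divisible by $m$; $\mathcal{D}(C,\delta)$ is the set of its equivalence classes. Let $x\sim_C y$ iff $x\sim_{C,\delta}y$ for all $\delta>0$; $\mathcal{D}(C)$ is its set of classes. For $D\in\mathcal{D}(C)$, $D_\delta$ is the element of $\mathcal{D}(C,\delta)$ containing $D$. $W^s(C)=\{x\colon\lim_i d(f^i(x),C)=0\}$ and $V^s(D)=\bigcap_{\delta>0}\{x\in W^s(C)\colon\lim_i d(f^i(x),f^i(D_\delta))=0\}$. $g$ has the s-limit shadowing property if for every $\epsilon>0$ there is $\delta>0$ such that for every sequence $(y_i)_{i\ge0}$ with $d'(g(y_i),y_{i+1})\le\delta$ for all $i$ and $d'(g(y_i),y_{i+1})\to0$ there is $y\in Y$ with $d'(g^i(y),y_i)\le\epsilon$ for all $i$ and $d'(g^i(y),y_i)\to0$. A Furstenberg family is a nonempty proper family $\mathcal{F}\subsetneq 2^{\mathbb{N}_0}$ closed under taking supersets; it is full if $\{i\in A\colon i\ge n\}\in\mathcal{F}$ for all $A\in\mathcal{F}$, $n\ge0$. For $x_1,\dots,x_n\in X$, $r>0$: $S_f(x_1,\dots,x_n;r)=\{i\in\mathbb{N}_0\colon\min_{j<k}d(f^i(x_j),f^i(x_k))>r\}$ and $T_f(x_1,\dots,x_n;r)=\{i\in\mathbb{N}_0\colon\max_{j<k}d(f^i(x_j),f^i(x_k))<r\}$. $(x_1,\dots,x_n)$ is $(\mathcal{F},\mathcal{G})$-$\delta$-scrambled for $f$ if $S_f(x_1,\dots,x_n;\delta)\in\mathcal{F}$ and $T_f(x_1,\dots,x_n;\epsilon)\in\mathcal{G}$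 for all $\epsilon>0$. A nonempty $Z\subset X$ is dense $(\mathcal{F},\mathcal{G})$-$n$-$\delta$-chaotic for $f$ if the set of $(\mathcal{F},\mathcal{G})$-$\delta$-scrambled $n$-tuples in $Z^n$ is dense in $Z^n$ (analogously for $g$). *)

theory Defs
  imports "HOL-Analysis.Analysis"
begin

definition delta_chain :: "('a::metric_space \<Rightarrow> 'a) \<Rightarrow> real \<Rightarrow> (nat \<Rightarrow> 'a) \<Rightarrow> nat \<Rightarrow> bool" where
  "delta_chain f \<delta> c k \<longleftrightarrow> k \<ge> 1 \<and> (\<forall>i<k. dist (f (c i)) (c (Suc i)) \<le> \<delta>)"

definition chain_to :: "('a::metric_space \<Rightarrow> 'a) \<Rightarrow> 'a \<Rightarrow> 'a \<Rightarrow> bool" where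
  "chain_to f x y \<longleftrightarrow> (\<forall>\<delta>>0. \<exists>c k. delta_chain f \<delta> c k \<and> c 0 = x \<and> c k = y)"

definition chain_recurrent :: "('a::metric_space \<Rightarrow> 'a) \<Rightarrow> 'a set" where
  "chain_recurrent f = {x. chain_to f x x}"

definition chain_components :: "('a::metric_space \<Rightarrow> 'a) \<Rightarrow> 'a set set" where
  "chain_components f =
     {{y \<in> chain_recurrent f. chain_to f x y \<and> chain_to f y x} | x. x \<in> chain_recurrent f}"

definition delta_chain_on :: "('a::metric_space \<Rightarrow> 'a) \<Rightarrow> 'a set \<Rightarrow> real \<Rightarrow> (nat \<Rightarrow> 'a) \<Rightarrow> nat \<Rightarrow> bool" where
  "delta_chain_on f C \<delta> c k \<longleftrightarrow> delta_chain f \<delta> c k \<and> (\<forall>i\<le>k. c i \<in> C)"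

definition cycle_gcd :: "('a::metric_space \<Rightarrow> 'a) \<Rightarrow> 'a set \<Rightarrow> real \<Rightarrow> nat" where
  "cycle_gcd f C \<delta> = Gcd {k. \<exists>c. delta_chain_on f C \<delta> c k \<and> c 0 = c k}"

definition cyc_rel :: "('a::metric_space \<Rightarrow> 'a) \<Rightarrow> 'a set \<Rightarrow> real \<Rightarrow> 'a \<Rightarrow> 'a \<Rightarrow> bool" where
  "cyc_rel f C \<delta> x y \<longleftrightarrow> x \<in> C \<and> y \<in> C \<and>
     (\<exists>c k. delta_chain_on f C \<delta> c k \<and> c 0 = x \<and> c k = y \<and> cycle_gcd f C \<delta> dvd k)"

definition cyc_classes :: "('a::metric_space \<Rightarrow> 'a) \<Rightarrow> 'a set \<Rightarrow> real \<Rightarrow> 'a set set" where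
  "cyc_classes f C \<delta> = {{y. cyc_rel f C \<delta> x y} | x. x \<in> C}"

definition cyc_rel_lim :: "('a::metric_space \<Rightarrow> 'a) \<Rightarrow> 'a set \<Rightarrow> 'a \<Rightarrow> 'a \<Rightarrow> bool" where
  "cyc_rel_lim f C x y \<longleftrightarrow> (\<forall>\<delta>>0. cyc_rel f C \<delta> x y)"

definition cyc_classes_lim :: "('a::metric_space \<Rightarrow> 'a) \<Rightarrow> 'a set \<Rightarrow> 'a set set" where
  "cyc_classes_lim f C = {{y. cyc_rel_lim f C x y} | x. x \<in> C}"

definition class_at :: "('a::metric_space \<Rightarrow> 'a) \<Rightarrow> 'a set \<Rightarrow> 'a set \<Rightarrow> real \<Rightarrow> 'a set" where
  "class_at f C D \<delta> = (THE E. E \<in> cyc_classes f C \<delta> \<and> D \<subseteq> E)"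

definition stable_set :: "('a::metric_space \<Rightarrow> 'a) \<Rightarrow> 'a set \<Rightarrow> 'a set" where
  "stable_set f C = {x. (\<lambda>i. infdist ((f ^^ i) x) C) \<longlonglongrightarrow> 0}"

definition stable_set_class :: "('a::metric_space \<Rightarrow> 'a) \<Rightarrow> 'a set \<Rightarrow> 'a set \<Rightarrow> 'a set" where
  "stable_set_class f C D = (\<Inter>\<delta>\<in>{\<delta>. \<delta> > 0}.
     {x \<in> stable_set f C. (\<lambda>i. infdist ((f ^^ i) x) ((f ^^ i) ` class_at f C D \<delta>)) \<longlonglongrightarrow> 0})"

definition s_limit_shadowing :: "('a::metric_space \<Rightarrow> 'a) \<Rightarrow> bool" where
  "s_limit_shadowing g \<longleftrightarrow> (\<forall>\<epsilon>>0. \<exists>\<delta>>0. \<forall>y::nat \<Rightarrow> 'a.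
     (\<forall>i. dist (g (y i)) (y (Suc i)) \<le> \<delta>) \<and> (\<lambda>i. dist (g (y i)) (y (Suc i))) \<longlonglongrightarrow> 0 \<longrightarrow>
     (\<exists>z. (\<forall>i. dist ((g ^^ i) z) (y i) \<le> \<epsilon>) \<and> (\<lambda>i. dist ((g ^^ i) z) (y i)) \<longlonglongrightarrow> 0))"

definition furstenberg_family :: "nat set set \<Rightarrow> bool" where
  "furstenberg_family \<F> \<longleftrightarrow> \<F> \<noteq> {} \<and> \<F> \<noteq> UNIV \<and> (\<forall>A B. A \<in> \<F> \<and> A \<subseteq> B \<longrightarrow> B \<in> \<F>)"

definition full_family :: "nat set set \<Rightarrow> bool" where
  "full_family \<F> \<longleftrightarrow> furstenberg_family \<F> \<and> (\<forall>A\<in>\<F>. \<forall>n. {i \<in> A. i \<ge> n} \<in> \<F>)"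

text \<open>Tuples (x_0, ..., x_{n-1}) are represented as functions nat => 'a (values at j >= n are ignored).
  S_f: the minimum over pairs j<k of the distances exceeds r; T_f: the maximum is below r.\<close>
definition S_set :: "('a::metric_space \<Rightarrow> 'a) \<Rightarrow> nat \<Rightarrow> (nat \<Rightarrow> 'a) \<Rightarrow> real \<Rightarrow> nat set" where
  "S_set f n x r = {i. \<forall>j k. j < k \<and> k < n \<longrightarrow> dist ((f ^^ i) (x j)) ((f ^^ i) (x k)) > r}"

definition T_set :: "('a::metric_space \<Rightarrow> 'a) \<Rightarrow> nat \<Rightarrow> (nat \<Rightarrow> 'a) \<Rightarrow> real \<Rightarrow> nat set" where
  "T_set f n x r = {i. \<forall>j k. j < k \<and> k < n \<longrightarrow> dist ((f ^^ i) (x j)) ((f ^^ i) (x k)) < r}"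

definition scrambled :: "nat set set \<Rightarrow> nat set set \<Rightarrow> ('a::metric_space \<Rightarrow> 'a) \<Rightarrow> nat \<Rightarrow> real \<Rightarrow> (nat \<Rightarrow> 'a) \<Rightarrow> bool" where
  "scrambled \<F> \<G> f n \<delta> x \<longleftrightarrow> S_set f n x \<delta> \<in> \<F> \<and> (\<forall>\<epsilon>>0. T_set f n x \<epsilon> \<in> \<G>)"

definition dense_chaotic :: "nat set set \<Rightarrow> nat set set \<Rightarrow> ('a::metric_space \<Rightarrow> 'a) \<Rightarrow> nat \<Rightarrow> real \<Rightarrow> 'a set \<Rightarrow> bool" where
  "dense_chaotic \<F> \<G> f n \<delta> Z \<longleftrightarrow> Z \<noteq> {} \<and>
     (\<forall>z. (\<forall>j<n. z j \<in> Z) \<longrightarrow> (\<forall>\<epsilon>>0. \<exists>x. (\<forall>j<n. x j \<in> Z) \<and> scrambled \<F> \<G> f n \<delta> x \<and>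
        (\<forall>j<n. dist (x j) (z j) < \<epsilon>)))"

end

theory Submission
  imports Defs
begin

lemma infdist_lessE:
  assumes "A \<noteq> {}" "infdist x A < e"
  obtains a where "a \<in> A" "dist x a < e"
proof -
  have "bdd_below ((\<lambda>a. dist x a) ` A)" by (rule bdd_belowI[of _ 0]) auto
  then show ?thesis using assms that by (auto simp: infdist_notempty cINF_less_iff)
qed

lemma delta_chain_on_UNIV: "delta_chain_on f UNIV \<delta> c k \<longleftrightarrow> delta_chain f \<delta> c k"
  by (simp add: delta_chain_on_def)

lemma chain_cat:
  assumes "delta_chain_on f C \<delta> c k" "delta_chain_on f C \<delta> d l" "c k = d 0"
  shows "delta_chain_on f C \<delta> (\<lambda>i. if i \<le> k then c i else d (i - k)) (k + l)"
  using assms unfolding delta_chain_on_def delta_chain_def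
proof (intro conjI allI impI)
  fix i assume A: "(1 \<le> k \<and> (\<forall>i<k. dist (f (c i)) (c (Suc i)) \<le> \<delta>)) \<and> (\<forall>i\<le>k. c i \<in> C)"
    "(1 \<le> l \<and> (\<forall>i<l. dist (f (d i)) (d (Suc i)) \<le> \<delta>)) \<and> (\<forall>i\<le>l. d i \<in> C)" "c k = d 0"
    and i: "i < k + l"
  show "dist (f (if i \<le> k then c i else d (i - k))) (if Suc i \<le> k then c (Suc i) else d (Suc i - k)) \<le> \<delta>"
  proof (cases "Suc i \<le> k")
    case True then show ?thesis using A by auto
  next
    case False
    then have "k \<le> i" by auto
    then have "Suc i - k = Suc (i - k)" "i - k < l" using i by auto
    moreover have "(if i \<le> k then c i else d (i - k)) = d (i - k)" using A(3) \<open>k \<le> i\<close> by auto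
    ultimately show ?thesis using A False by auto
  qed
qed auto

lemma chain_cat':
  assumes "delta_chain_on f C \<delta> c k" "delta_chain_on f C \<delta> d l" "c k = d 0"
  shows "\<exists>e. delta_chain_on f C \<delta> e (k + l) \<and> e 0 = c 0 \<and> e (k + l) = d l"
  apply (rule exI[of _ "\<lambda>i. if i \<le> k then c i else d (i - k)"])
  using chain_cat[OF assms] assms(2,3) by (auto simp: delta_chain_on_def delta_chain_def)

lemma chain_to_trans:
  assumes "chain_to f x y" "chain_to f y z" shows "chain_to f x z"
  unfolding chain_to_def
proof (intro allI impI)
  fix \<delta> :: real assume "\<delta> > 0"
  then obtain c k d l where "delta_chain f \<delta> c k" "c 0 = x" "c k = y" "delta_chain f \<delta> d l" "d 0 = y" "d l = z"
    using assms unfolding chain_to_def by meson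
  then show "\<exists>c k. delta_chain f \<delta> c k \<and> c 0 = x \<and> c k = z"
    using chain_cat'[of f UNIV \<delta> c k d l] by (auto simp: delta_chain_on_UNIV)
qed

lemma chain_end_approx:
  assumes "delta_chain f d1 c k" "dist (c k) y \<le> d2" "d2 \<ge> 0"
  shows "delta_chain f (d1 + d2) (c(k := y)) k"
  using assms unfolding delta_chain_def
proof (intro conjI allI impI)
  fix i assume A: "1 \<le> k \<and> (\<forall>i<k. dist (f (c i)) (c (Suc i)) \<le> d1)" "i < k"
  show "dist (f ((c(k := y)) i)) ((c(k := y)) (Suc i)) \<le> d1 + d2"
  proof (cases "Suc i = k")
    case True
    have "dist (f (c i)) y \<le> dist (f (c i)) (c k) + dist (c k) y" by (rule dist_triangle)
    then show ?thesis using A True assms(2) by force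
  qed (use A assms in auto)
qed auto

lemma chain_start_approx:
  assumes "delta_chain f d1 c k" "dist (f x) (f (c 0)) \<le> d2" "d2 \<ge> 0"
  shows "delta_chain f (d1 + d2) (c(0 := x)) k"
  using assms unfolding delta_chain_def
proof (intro conjI allI impI)
  fix i assume A: "1 \<le> k \<and> (\<forall>i<k. dist (f (c i)) (c (Suc i)) \<le> d1)" "i < k"
  show "dist (f ((c(0 := x)) i)) ((c(0 := x)) (Suc i)) \<le> d1 + d2"
  proof (cases "i = 0")
    case True
    have "dist (f x) (c 1) \<le> dist (f x) (f (c 0)) + dist (f (c 0)) (c 1)" by (rule dist_triangle)
    then show ?thesis using A True assms(2) by force
  qed (use A assms in auto)
qed auto

lemma chain_prefix:
  assumes "delta_chain f d c k" "1 \<le> i" "i \<le> k" shows "delta_chain f d c i"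
  using assms by (auto simp: delta_chain_def)

lemma chain_suffix:
  assumes "delta_chain f d c k" "i < k" shows "delta_chain f d (\<lambda>j. c (i + j)) (k - i)"
  using assms by (auto simp: delta_chain_def)

lemma chain_mono: "delta_chain f d c k \<Longrightarrow> d \<le> d' \<Longrightarrow> delta_chain f d' c k"
  by (force simp: delta_chain_def)

lemma chain_on_mono: "delta_chain_on f C d c k \<Longrightarrow> d \<le> d' \<Longrightarrow> delta_chain_on f C d' c k"
  by (force simp: delta_chain_on_def delta_chain_def)

lemma chain_to_end:
  assumes "\<And>e. e > 0 \<Longrightarrow> \<exists>y'. chain_to f x y' \<and> dist y' y < e"
  shows "chain_to f x y"
  unfolding chain_to_def
proof (intro allI impI)
  fix \<delta> :: real assume d: "\<delta> > 0"
  obtain y' where y': "chain_to f x y'" "dist y' y < \<delta>/2" using assms[of "\<delta>/2"] d by auto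
  obtain c k where c: "delta_chain f (\<delta>/2) c k" "c 0 = x" "c k = y'" using y'(1) d unfolding chain_to_def by (meson half_gt_zero)
  have "delta_chain f (\<delta>/2 + \<delta>/2) (c(k := y)) k" by (rule chain_end_approx) (use c y' d in auto)
  moreover have "k \<ge> 1" using c by (simp add: delta_chain_def)
  ultimately show "\<exists>c k. delta_chain f \<delta> c k \<and> c 0 = x \<and> c k = y" using c by (intro exI[of _ "c(k := y)"] exI[of _ k]) auto
qed

lemma chain_to_start:
  assumes "isCont f x" "\<And>e. e > 0 \<Longrightarrow> \<exists>x'. chain_to f x' y \<and> dist x' x < e"
  shows "chain_to f x y"
  unfolding chain_to_def
proof (intro allI impI)
  fix \<delta> :: real assume d: "\<delta> > 0"
  obtain r where r: "r > 0" "\<And>x'. dist x' x < r \<Longrightarrow> dist (f x') (f x) < \<delta>/2"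
    using assms(1) d unfolding continuous_at_eps_delta by (meson half_gt_zero)
  obtain x' where x': "chain_to f x' y" "dist x' x < r" using assms(2) r by auto
  obtain c k where c: "delta_chain f (\<delta>/2) c k" "c 0 = x'" "c k = y" using x'(1) d unfolding chain_to_def by (meson half_gt_zero)
  have "dist (f x) (f x') < \<delta>/2" using r(2)[of x'] x'(2) by (simp add: dist_commute)
  then have "delta_chain f (\<delta>/2 + \<delta>/2) (c(0 := x)) k" by (intro chain_start_approx) (use c d in auto)
  moreover have "k \<ge> 1" using c by (simp add: delta_chain_def)
  ultimately show "\<exists>c k. delta_chain f \<delta> c k \<and> c 0 = x \<and> c k = y" using c by (intro exI[of _ "c(0 := x)"] exI[of _ k]) auto
qed

lemma cont_isCont: "continuous_on UNIV f \<Longrightarrow> isCont f x"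
  by (simp add: continuous_on_eq_continuous_at)

lemma comp_rep:
  assumes "C \<in> chain_components f"
  obtains x0 where "x0 \<in> C" "\<And>y. y \<in> C \<longleftrightarrow> chain_to f x0 y \<and> chain_to f y x0"
proof -
  obtain x0 where x0: "x0 \<in> chain_recurrent f" "C = {y \<in> chain_recurrent f. chain_to f x0 y \<and> chain_to f y x0}"
    using assms unfolding chain_components_def by auto
  have "y \<in> C \<longleftrightarrow> chain_to f x0 y \<and> chain_to f y x0" for y
    using x0 chain_to_trans[of f y x0 y] by (auto simp: chain_recurrent_def)
  moreover have "x0 \<in> C" using x0 by (auto simp: chain_recurrent_def)
  ultimately show ?thesis using that by blast
qed

lemma comp_mem:
  assumes "C \<in> chain_components f" "x \<in> C"
  shows "y \<in> C \<longleftrightarrow> chain_to f x y \<and> chain_to f y x"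
proof -
  obtain x0 where x0: "x0 \<in> C" "\<And>y. y \<in> C \<longleftrightarrow> chain_to f x0 y \<and> chain_to f y x0"
    using comp_rep[OF assms(1)] by blast
  show ?thesis using x0(2)[of x] x0(2)[of y] assms(2) chain_to_trans by metis
qed

lemma comp_chain: "C \<in> chain_components f \<Longrightarrow> x \<in> C \<Longrightarrow> y \<in> C \<Longrightarrow> chain_to f x y"
  using comp_mem by blast

lemma comp_closed:
  assumes "C \<in> chain_components f" "continuous_on UNIV f"
  shows "closed C"
  unfolding closed_sequential_limits
proof (intro allI impI)
  fix z l assume A: "(\<forall>n. z n \<in> C) \<and> z \<longlonglongrightarrow> l"
  obtain x0 where x0: "x0 \<in> C" "\<And>y. y \<in> C \<longleftrightarrow> chain_to f x0 y \<and> chain_to f y x0"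
    using comp_rep[OF assms(1)] by blast
  have ev: "\<exists>n. dist (z n) l < e" if "e > 0" for e
    using A tendstoD[of z l sequentially e] that by (auto simp: eventually_sequentially)
  have "chain_to f x0 l"
    by (rule chain_to_end) (use ev x0 A in blast)
  moreover have "chain_to f l x0"
    by (rule chain_to_start[OF cont_isCont[OF assms(2)]]) (use ev x0 A in \<open>metis dist_commute\<close>)
  ultimately show "l \<in> C" using x0 by blast
qed

lemma comp_compact:
  assumes "C \<in> chain_components f" "continuous_on UNIV f" "compact (UNIV :: 'a::metric_space set)"
  shows "compact (C :: 'a set)"
  using compact_Int_closed[OF assms(3) comp_closed[OF assms(1,2)]] by simp

lemma chain_to_long:
  assumes "chain_to f x x" "\<delta> > 0"
  shows "\<exists>c k. delta_chain f \<delta> c k \<and> c 0 = x \<and> c k = x \<and> k \<ge> 2"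
proof -
  obtain c k where c: "delta_chain f \<delta> c k" "c 0 = x" "c k = x" using assms unfolding chain_to_def by blast
  obtain e where e: "delta_chain_on f UNIV \<delta> e (k + k)" "e 0 = x" "e (k+k) = x"
    using chain_cat'[of f UNIV \<delta> c k c k] c by (auto simp: delta_chain_on_UNIV)
  have "k \<ge> 1" using c by (simp add: delta_chain_def)
  then show ?thesis using e by (intro exI[of _ e] exI[of _ "k+k"]) (auto simp: delta_chain_on_UNIV)
qed

lemma comp_inv:
  assumes "C \<in> chain_components f" "continuous_on UNIV f" "x \<in> C"
  shows "f x \<in> C"
proof -
  have xx: "chain_to f x x" using comp_chain assms by metis
  have "chain_to f x (f x)"
    unfolding chain_to_def by (intro allI impI exI[of _ "\<lambda>i. (f ^^ i) x"] exI[of _ 1]) (auto simp: delta_chain_def)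
  moreover have "chain_to f (f x) x"
    unfolding chain_to_def
  proof (intro allI impI)
    fix \<delta> :: real assume d: "\<delta> > 0"
    obtain r where r: "r > 0" "\<And>x'. dist x' (f x) < r \<Longrightarrow> dist (f x') (f (f x)) < \<delta>/2"
      using cont_isCont[OF assms(2)] d unfolding continuous_at_eps_delta by (meson half_gt_zero)
    define e where "e = min (r/2) (\<delta>/2)"
    have e: "e > 0" using r d by (simp add: e_def)
    obtain c K where c: "delta_chain f e c K" "c 0 = x" "c K = x" "K \<ge> 2" using chain_to_long[OF xx e] by blast
    have s: "delta_chain f e (\<lambda>j. c (1 + j)) (K - 1)" by (rule chain_suffix) (use c in auto)
    have "dist (f (c 0)) (c 1) \<le> e" using c by (auto simp: delta_chain_def)
    then have "dist (c 1) (f x) < r" using c(2) r e_def by (simp add: dist_commute)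
    then have "dist (f (f x)) (f (c 1)) \<le> \<delta>/2" using r(2)[of "c 1"] by (simp add: dist_commute)
    then have "delta_chain f (e + \<delta>/2) ((\<lambda>j. c (1 + j))(0 := f x)) (K - 1)"
      by (intro chain_start_approx[OF s]) (use d in auto)
    then have "delta_chain f \<delta> ((\<lambda>j. c (1 + j))(0 := f x)) (K - 1)"
      by (rule chain_mono) (simp add: e_def)
    moreover have "((\<lambda>j. c (1 + j))(0 := f x)) (K - 1) = x" using c by auto
    ultimately show "\<exists>c k. delta_chain f \<delta> c k \<and> c 0 = f x \<and> c k = x" by force
  qed
  ultimately show ?thesis using comp_mem[OF assms(1,3)] by blast
qed

lemma comp_iter:
  assumes "C \<in> chain_components f" "continuous_on UNIV f" "x \<in> C"
  shows "(f ^^ i) x \<in> C"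
  by (induction i) (use comp_inv[OF assms(1,2)] assms(3) in auto)

lemma orbit_chain_on:
  assumes "C \<in> chain_components f" "continuous_on UNIV f" "x \<in> C" "N \<ge> 1" "\<delta> \<ge> 0"
  shows "delta_chain_on f C \<delta> (\<lambda>i. (f ^^ i) x) N"
  using assms comp_iter[OF assms(1-3)] by (auto simp: delta_chain_on_def delta_chain_def)

lemma comp_CT:
  fixes f :: "'a::metric_space \<Rightarrow> 'a"
  assumes cpt: "compact (UNIV :: 'a set)" and cont: "continuous_on UNIV f"
    and C: "C \<in> chain_components f" and xC: "x \<in> C" and yC: "y \<in> C" and d: "\<delta> > 0"
  shows "\<exists>c k. delta_chain_on f C \<delta> c k \<and> c 0 = x \<and> c k = y"
proof -
  have uc: "uniformly_continuous_on UNIV f" by (rule compact_uniformly_continuous[OF cont cpt])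
  obtain \<eta>0 where \<eta>0: "\<eta>0 > 0" "\<And>a b. dist a b < \<eta>0 \<Longrightarrow> dist (f a) (f b) < \<delta>/3"
    using uc d unfolding uniformly_continuous_on_def by (metis UNIV_I divide_pos_pos zero_less_numeral)
  define \<eta> where "\<eta> = min \<eta>0 (\<delta>/3)"
  have \<eta>: "\<eta> > 0" "\<eta> \<le> \<delta>/3" "\<And>a b. dist a b < \<eta> \<Longrightarrow> dist (f a) (f b) < \<delta>/3"
    using \<eta>0 d by (auto simp: \<eta>_def)
  have claim: "\<exists>\<epsilon>>0. \<forall>c k i. delta_chain f \<epsilon> c k \<and> c 0 = x \<and> c k = y \<and> i \<le> k \<longrightarrow> (\<exists>z\<in>C. dist (c i) z < \<eta>)"
  proof (rule ccontr)
    assume "\<not> ?thesis"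
    then have "\<forall>m. \<exists>c k i. delta_chain f (inverse (real (Suc m))) c k \<and> c 0 = x \<and> c k = y \<and> i \<le> k \<and> (\<forall>z\<in>C. \<eta> \<le> dist (c i) z)"
      by (metis not_less of_nat_0_less_iff positive_imp_inverse_positive zero_less_Suc)
    then obtain cs ks js where F: "\<And>m. delta_chain f (inverse (real (Suc m))) (cs m) (ks m) \<and> cs m 0 = x \<and> cs m (ks m) = y \<and> js m \<le> ks m \<and> (\<forall>z\<in>C. \<eta> \<le> dist (cs m (js m)) z)"
      by metis
    have i1: "js m \<ge> 1" for m
    proof (rule ccontr)
      assume "\<not> js m \<ge> 1" then have "js m = 0" by simp
      then show False using F[of m] xC \<eta> by force
    qed
    have i2: "js m < ks m" for m
    proof (rule ccontr)
      assume "\<not> js m < ks m" then have "js m = ks m" using F[of m] by simp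
      then show False using F[of m] yC \<eta> by force
    qed
    define z where "z m = cs m (js m)" for m
    obtain l r where lr: "strict_mono r" "(z \<circ> r) \<longlonglongrightarrow> l"
      using cpt unfolding compact_eq_seq_compact_metric seq_compact_def by blast
    have inv0: "(\<lambda>m. inverse (real (Suc (r m)))) \<longlonglongrightarrow> 0"
      using LIMSEQ_subseq_LIMSEQ[OF LIMSEQ_inverse_real_of_nat lr(1)] by (simp add: o_def)
    have good: "\<exists>m. dist (z (r m)) l < a \<and> inverse (real (Suc (r m))) < b" if "a > 0" "b > 0" for a b
    proof -
      have "eventually (\<lambda>m. dist ((z \<circ> r) m) l < a) sequentially" using tendstoD[OF lr(2) that(1)] .
      moreover have "eventually (\<lambda>m. dist (inverse (real (Suc (r m)))) 0 < b) sequentially" using tendstoD[OF inv0 that(2)] .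
      ultimately have "eventually (\<lambda>m. dist (z (r m)) l < a \<and> inverse (real (Suc (r m))) < b) sequentially"
        by eventually_elim auto
      then show ?thesis by (auto simp: eventually_sequentially)
    qed
    have xl: "chain_to f x l"
      unfolding chain_to_def
    proof (intro allI impI)
      fix e :: real assume e: "e > 0"
      obtain m where m: "dist (z (r m)) l < e/2" "inverse (real (Suc (r m))) < e/2" using good[of "e/2" "e/2"] e by auto
      let ?c = "cs (r m)" and ?i = "js (r m)"
      have "delta_chain f (inverse (real (Suc (r m)))) ?c ?i" by (rule chain_prefix) (use F i1 in auto)
      then have "delta_chain f (inverse (real (Suc (r m))) + e/2) (?c(?i := l)) ?i"
        by (rule chain_end_approx) (use m e z_def in auto)
      then have "delta_chain f e (?c(?i := l)) ?i" by (rule chain_mono) (use m in auto)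
      moreover have "(?c(?i := l)) 0 = x" using F i1[of "r m"] by auto
      ultimately show "\<exists>c k. delta_chain f e c k \<and> c 0 = x \<and> c k = l" by force
    qed
    have ly: "chain_to f l y"
      unfolding chain_to_def
    proof (intro allI impI)
      fix e :: real assume e: "e > 0"
      obtain \<rho> where \<rho>: "\<rho> > 0" "\<And>x'. dist x' l < \<rho> \<Longrightarrow> dist (f x') (f l) < e/2"
        using cont_isCont[OF cont] e unfolding continuous_at_eps_delta by (meson half_gt_zero)
      obtain m where m: "dist (z (r m)) l < \<rho>" "inverse (real (Suc (r m))) < e/2" using good[of \<rho> "e/2"] e \<rho> by auto
      let ?c = "\<lambda>j. cs (r m) (js (r m) + j)" and ?k = "ks (r m) - js (r m)"
      have "delta_chain f (inverse (real (Suc (r m)))) ?c ?k" by (rule chain_suffix) (use F i2 in auto)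
      moreover have "dist (f l) (f (?c 0)) \<le> e/2" using \<rho>(2)[of "z (r m)"] m by (simp add: z_def dist_commute)
      ultimately have "delta_chain f (inverse (real (Suc (r m))) + e/2) (?c(0 := l)) ?k"
        by (intro chain_start_approx) (use e in auto)
      then have "delta_chain f e (?c(0 := l)) ?k" by (rule chain_mono) (use m in auto)
      moreover have "(?c(0 := l)) ?k = y" using F i2[of "r m"] by auto
      ultimately show "\<exists>c k. delta_chain f e c k \<and> c 0 = l \<and> c k = y" by force
    qed
    have "chain_to f l x" using chain_to_trans[OF ly comp_chain[OF C yC xC]] .
    then have lC: "l \<in> C" using comp_mem[OF C xC] xl by blast
    obtain m where "dist (z (r m)) l < \<eta>" using good[of \<eta> 1] \<eta> by auto
    then show False using F[of "r m"] lC by (auto simp: z_def)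
  qed
  then obtain \<epsilon> where \<epsilon>: "\<epsilon> > 0" "\<And>c k i. delta_chain f \<epsilon> c k \<Longrightarrow> c 0 = x \<Longrightarrow> c k = y \<Longrightarrow> i \<le> k \<Longrightarrow> \<exists>z\<in>C. dist (c i) z < \<eta>"
    by blast
  define \<epsilon>' where "\<epsilon>' = min \<epsilon> (\<delta>/3)"
  have "\<epsilon>' > 0" using \<epsilon> d by (simp add: \<epsilon>'_def)
  then obtain c k where c: "delta_chain f \<epsilon>' c k" "c 0 = x" "c k = y"
    using comp_chain[OF C xC yC] unfolding chain_to_def by blast
  have ce: "delta_chain f \<epsilon> c k" by (rule chain_mono[OF c(1)]) (simp add: \<epsilon>'_def)
  define c' where "c' i = (if i = 0 then x else if i = k then y else (SOME z. z \<in> C \<and> dist (c i) z < \<eta>))" for i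
  have c'P: "c' i \<in> C \<and> dist (c i) (c' i) < \<eta>" if "i \<le> k" for i
  proof -
    consider "i = 0" | "i \<noteq> 0" "i = k" | "i \<noteq> 0" "i \<noteq> k" by blast
    then show ?thesis
    proof cases
      case 1 then show ?thesis using xC c \<eta> by (simp add: c'_def)
    next
      case 2 then show ?thesis using yC c \<eta> by (simp add: c'_def)
    next
      case 3
      have "\<exists>z. z \<in> C \<and> dist (c i) z < \<eta>" using \<epsilon>(2)[OF ce c(2,3) that] by blast
      then have "(SOME z. z \<in> C \<and> dist (c i) z < \<eta>) \<in> C \<and> dist (c i) (SOME z. z \<in> C \<and> dist (c i) z < \<eta>) < \<eta>"
        by (rule someI_ex)
      then show ?thesis using 3 unfolding c'_def by simp
    qed
  qed
  have "delta_chain_on f C \<delta> c' k"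
    unfolding delta_chain_on_def delta_chain_def
  proof (intro conjI allI impI)
    show "1 \<le> k" using c by (simp add: delta_chain_def)
    fix i assume i: "i < k"
    have "dist (f (c' i)) (c' (Suc i)) \<le> dist (f (c' i)) (f (c i)) + dist (f (c i)) (c (Suc i)) + dist (c (Suc i)) (c' (Suc i))"
      by (metis dist_triangle add.commute add_left_mono order_trans)
    also have "\<dots> \<le> \<delta>/3 + \<delta>/3 + \<delta>/3"
    proof -
      have "dist (f (c' i)) (f (c i)) < \<delta>/3" using \<eta>(3) c'P[of i] i by (simp add: dist_commute)
      moreover have "dist (f (c i)) (c (Suc i)) \<le> \<delta>/3" using c i by (auto simp: delta_chain_def \<epsilon>'_def)
      moreover have "dist (c (Suc i)) (c' (Suc i)) < \<delta>/3" using c'P[of "Suc i"] i \<eta> by auto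
      ultimately show ?thesis by linarith
    qed
    finally show "dist (f (c' i)) (c' (Suc i)) \<le> \<delta>" by simp
  next
    fix i assume "i \<le> k" then show "c' i \<in> C" using c'P by blast
  qed
  moreover have "c' 0 = x" "c' k = y" using c by (auto simp: c'_def delta_chain_def)
  ultimately show ?thesis by blast
qed

lemma gcd_dvd_cycle: "delta_chain_on f C \<delta> c k \<Longrightarrow> c 0 = c k \<Longrightarrow> cycle_gcd f C \<delta> dvd k"
  unfolding cycle_gcd_def by (rule Gcd_dvd) blast

lemma cyc_refl:
  fixes f :: "'a::metric_space \<Rightarrow> 'a"
  assumes "compact (UNIV :: 'a set)" "continuous_on UNIV f" "C \<in> chain_components f" "x \<in> C" "\<delta> > 0"
  shows "cyc_rel f C \<delta> x x"
proof -
  obtain c k where "delta_chain_on f C \<delta> c k" "c 0 = x" "c k = x" using comp_CT[OF assms(1-4) assms(4,5)] by blast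
  then show ?thesis using gcd_dvd_cycle[of f C \<delta> c k] assms(4) unfolding cyc_rel_def by auto
qed

lemma cyc_trans:
  assumes "cyc_rel f C \<delta> x y" "cyc_rel f C \<delta> y z" shows "cyc_rel f C \<delta> x z"
proof -
  obtain c k d l where "delta_chain_on f C \<delta> c k" "c 0 = x" "c k = y" "cycle_gcd f C \<delta> dvd k"
    "delta_chain_on f C \<delta> d l" "d 0 = y" "d l = z" "cycle_gcd f C \<delta> dvd l"
    using assms unfolding cyc_rel_def by blast
  then show ?thesis using chain_cat'[of f C \<delta> c k d l] assms unfolding cyc_rel_def by (metis dvd_add)
qed

lemma cyc_sym:
  fixes f :: "'a::metric_space \<Rightarrow> 'a"
  assumes "compact (UNIV :: 'a set)" "continuous_on UNIV f" "C \<in> chain_components f" "\<delta> > 0"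
    and "cyc_rel f C \<delta> x y"
  shows "cyc_rel f C \<delta> y x"
proof -
  obtain c k where c: "delta_chain_on f C \<delta> c k" "c 0 = x" "c k = y" "cycle_gcd f C \<delta> dvd k" "x \<in> C" "y \<in> C"
    using assms(5) unfolding cyc_rel_def by blast
  obtain d l where d: "delta_chain_on f C \<delta> d l" "d 0 = y" "d l = x" using comp_CT[OF assms(1-3) c(6,5) assms(4)] by blast
  obtain e where "delta_chain_on f C \<delta> e (k + l)" "e 0 = x" "e (k + l) = x"
    using chain_cat'[OF c(1) d(1)] c d by auto
  then have "cycle_gcd f C \<delta> dvd k + l" using gcd_dvd_cycle by metis
  then have "cycle_gcd f C \<delta> dvd l" using c(4) by (simp add: dvd_add_right_iff)
  then show ?thesis using d c unfolding cyc_rel_def by blast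
qed

lemma class_at_eq:
  fixes f :: "'a::metric_space \<Rightarrow> 'a"
  assumes "compact (UNIV :: 'a set)" "continuous_on UNIV f" "C \<in> chain_components f" "\<delta> > 0"
    and "p \<in> A" "\<forall>a\<in>A. cyc_rel f C \<delta> p a"
  shows "class_at f C A \<delta> = {y. cyc_rel f C \<delta> p y}"
  unfolding class_at_def
proof (rule the_equality)
  have "p \<in> C" using assms(5,6) by (auto simp: cyc_rel_def)
  then show "{y. cyc_rel f C \<delta> p y} \<in> cyc_classes f C \<delta> \<and> A \<subseteq> {y. cyc_rel f C \<delta> p y}"
    using assms(6) unfolding cyc_classes_def by blast
next
  fix E assume E: "E \<in> cyc_classes f C \<delta> \<and> A \<subseteq> E"
  then obtain u where u: "u \<in> C" "E = {y. cyc_rel f C \<delta> u y}" unfolding cyc_classes_def by blast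
  have up: "cyc_rel f C \<delta> u p" using E u assms(5) by blast
  have pu: "cyc_rel f C \<delta> p u" using cyc_sym[OF assms(1-4) up] .
  show "E = {y. cyc_rel f C \<delta> p y}" using u up pu cyc_trans by blast
qed

lemma mult_in_semigroup:
  fixes S :: "nat set"
  assumes add: "\<And>a b. a \<in> S \<Longrightarrow> b \<in> S \<Longrightarrow> a + b \<in> S" and "s \<in> S"
  shows "q * s \<in> insert 0 S"
  by (induction q) (use assms in \<open>auto simp: add.commute\<close>)

lemma mult_in_semigroup0:
  fixes S :: "nat set"
  assumes add: "\<And>a b. a \<in> S \<Longrightarrow> b \<in> S \<Longrightarrow> a + b \<in> S" and "s \<in> insert 0 S"
  shows "q * s \<in> insert 0 S"
  using assms mult_in_semigroup[OF add] by (cases "s = 0") auto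

lemma add0_in_semigroup:
  fixes S :: "nat set"
  assumes add: "\<And>a b. a \<in> S \<Longrightarrow> b \<in> S \<Longrightarrow> a + b \<in> S" and "a \<in> S" "b \<in> insert 0 S"
  shows "a + b \<in> S" "b + a \<in> S"
  using assms by (auto simp: add.commute)

lemma numsemigroup:
  fixes S :: "nat set"
  assumes add: "\<And>a b. a \<in> S \<Longrightarrow> b \<in> S \<Longrightarrow> a + b \<in> S" and s0: "s0 \<in> S" "s0 > 0"
  shows "\<exists>L1. \<forall>L\<ge>L1. Gcd S dvd L \<longrightarrow> L \<in> S"
proof -
  define Ds where "Ds = {d. d > 0 \<and> (\<exists>a\<in>insert 0 S. \<exists>b\<in>insert 0 S. a = b + d)}"
  have "s0 \<in> Ds" using s0 unfolding Ds_def by force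
  define d where "d = (LEAST d. d \<in> Ds)"
  have dD: "d \<in> Ds" using LeastI[of "\<lambda>d. d \<in> Ds", OF \<open>s0 \<in> Ds\<close>] by (simp add: d_def)
  have dmin: "\<And>e. e \<in> Ds \<Longrightarrow> d \<le> e" unfolding d_def by (rule Least_le)
  obtain a b where ab: "a \<in> insert 0 S" "b \<in> insert 0 S" "a = b + d" "d > 0" using dD unfolding Ds_def by blast
  have dvd: "d dvd s" if "s \<in> S" for s
  proof (rule ccontr)
    assume nd: "\<not> d dvd s"
    define q r where "q = s div d" and "r = s mod d"
    have sr: "s = q * d + r" by (simp add: q_def r_def)
    have r: "r > 0" "r < d" using nd ab(4) by (auto simp: r_def dvd_eq_mod_eq_0)
    have qa: "q * a \<in> insert 0 S" "q * b \<in> insert 0 S" using ab(1,2) mult_in_semigroup0[OF add] by auto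
    have "s + q * b \<in> S" using add0_in_semigroup[OF add that qa(2)] by simp
    moreover have "s + q * b = q * a + r" using sr ab(3) by (simp add: algebra_simps)
    ultimately have "\<exists>a'\<in>insert 0 S. \<exists>b'\<in>insert 0 S. a' = b' + r" using qa(1) by blast
    then have "r \<in> Ds" using r unfolding Ds_def by blast
    then have "d \<le> r" by (rule dmin)
    then show False using r by simp
  qed
  have m: "Gcd S = d"
  proof (rule dvd_antisym)
    have "Gcd S dvd a" using ab(1) by (cases "a = 0") (simp_all add: Gcd_dvd)
    moreover have "Gcd S dvd b" using ab(2) by (cases "b = 0") (simp_all add: Gcd_dvd)
    ultimately show "Gcd S dvd d" using ab(3) dvd_add_right_iff[of "Gcd S" b d] by simp
    show "d dvd Gcd S" using dvd by (rule Gcd_greatest)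
  qed
  show ?thesis
  proof (cases "b = 0")
    case True
    then have aS: "d \<in> S" using ab by auto
    show ?thesis
    proof (intro exI[of _ 1] allI impI)
      fix L :: nat assume "L \<ge> 1" "Gcd S dvd L"
      then obtain l where l: "L = d * l" using m by (auto simp: dvd_def)
      then have "L = l * d" by (simp add: mult.commute)
      then have "L \<in> insert 0 S" using mult_in_semigroup[OF add aS, of l] by simp
      then show "L \<in> S" using \<open>L \<ge> 1\<close> by auto
    qed
  next
    case False
    then have bS: "b \<in> S" and aS: "a \<in> S" using ab by auto
    obtain t where t: "b = t * d" using dvd[OF bS] by (auto simp: dvd_def mult.commute)
    have t1: "t \<ge> 1" using t False by (cases t) auto
    show ?thesis
    proof (intro exI[of _ "t * b"] allI impI)
      fix L :: nat assume L: "L \<ge> t * b" "Gcd S dvd L"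
      then obtain l where l: "L = l * d" using m by (auto simp: dvd_def mult.commute)
      have "t * t \<le> l" using L(1) l t ab(4) by (simp add: mult.assoc)
      define q \<rho> where "q = l div t" and "\<rho> = l mod t"
      have lq: "l = q * t + \<rho>" by (simp add: q_def \<rho>_def)
      have \<rho>t: "\<rho> < t" using t1 by (simp add: \<rho>_def)
      have "t \<le> q"
      proof (rule ccontr)
        assume "\<not> t \<le> q" then have "q + 1 \<le> t" by simp
        then have "(q + 1) * t \<le> t * t" by (rule mult_right_mono) simp
        moreover have "l < (q + 1) * t" using lq \<rho>t by simp
        ultimately show False using \<open>t * t \<le> l\<close> by simp
      qed
      then have qr: "q - \<rho> \<ge> 1" using \<rho>t by simp
      have "(q - \<rho>) * b \<in> S"
      proof -
        obtain j where "q - \<rho> = Suc j" using qr by (cases "q - \<rho>") auto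
        then have "(q - \<rho>) * b = b + j * b" by simp
        moreover have "b + j * b \<in> S" using add0_in_semigroup(1)[OF add bS mult_in_semigroup[OF add bS, of j]] .
        ultimately show ?thesis by simp
      qed
      moreover have "\<rho> * a \<in> insert 0 S" using mult_in_semigroup[OF add aS] by simp
      ultimately have "(q - \<rho>) * b + \<rho> * a \<in> S" using add0_in_semigroup(1)[of S "(q - \<rho>) * b" "\<rho> * a"] add by blast
      moreover have "(q - \<rho>) * b + \<rho> * a = L"
      proof -
        have "(q - \<rho>) * b + \<rho> * a = (q - \<rho>) * b + \<rho> * b + \<rho> * d" using ab(3) by (simp add: algebra_simps)
        also have "\<dots> = q * b + \<rho> * d" proof -
          have "(q - \<rho>) * b + \<rho> * b = ((q - \<rho>) + \<rho>) * b" by (simp only: add_mult_distrib)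
          also have "(q - \<rho>) + \<rho> = q" using \<open>t \<le> q\<close> \<rho>t by simp
          finally show ?thesis by simp
        qed
        also have "\<dots> = L" using t l lq by (simp add: algebra_simps)
        finally show ?thesis .
      qed
      ultimately show "L \<in> S" by simp
    qed
  qed
qed

lemma modarith:
  fixes k m L p q r :: nat
  assumes "k mod m = L mod m" "m dvd p+q+r" "m dvd k + r" "p + q \<le> L"
  shows "m dvd L - (p+q)"
proof -
  obtain q1 q2 where e1: "k + m * q1 = L + m * q2" using assms(1) nat_mod_eq_iff by blast
  obtain a where e2: "p + q + r = m * a" using assms(2) by (auto simp: dvd_def)
  obtain b where e3: "k + r = m * b" using assms(3) by (auto simp: dvd_def)
  have i1: "int k + int m * int q1 = int L + int m * int q2" using arg_cong[OF e1, of int] by simp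
  have i2: "int p + int q + int r = int m * int a" using arg_cong[OF e2, of int] by simp
  have i3: "int k + int r = int m * int b" using arg_cong[OF e3, of int] by simp
  have "int (L - (p+q)) = int m * (int b + int q1 - int q2 - int a)"
    using i1 i2 i3 assms(4) by (simp add: algebra_simps)
  then have "int m dvd int (L - (p+q))" by simp
  then show ?thesis by presburger
qed

lemma compact_bound:
  assumes "compact C" "\<forall>u\<in>C. \<exists>U p. open U \<and> u \<in> U \<and> (\<forall>u'\<in>C \<inter> U. R u' p)"
  shows "\<exists>P::nat. \<forall>u\<in>C. \<exists>p\<le>P. R u p"
proof -
  obtain U p where Up: "\<forall>u\<in>C. open (U u) \<and> u \<in> U u \<and> (\<forall>u'\<in>C \<inter> U u. R u' (p u))" using assms(2) by metis
  obtain F where F: "F \<subseteq> C" "finite F" "C \<subseteq> (\<Union>t\<in>F. U t)"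
    using compactE_image[OF assms(1), of C U] Up by blast
  show ?thesis
  proof (rule exI[of _ "Max (p ` F)"], intro ballI)
    fix u assume u: "u \<in> C"
    then obtain t where t: "t \<in> F" "u \<in> U t" using F by blast
    then have "R u (p t)" using Up F u by blast
    moreover have "p t \<le> Max (p ` F)" using F t by auto
    ultimately show "\<exists>q::nat. q \<le> Max (p ` F) \<and> R u q" by blast
  qed
qed

lemma chain_on_start:
  assumes "delta_chain_on f C d1 c k" "x \<in> C" "dist (f x) (f (c 0)) \<le> d2" "d2 \<ge> 0"
  shows "delta_chain_on f C (d1 + d2) (c(0 := x)) k"
  using chain_start_approx[of f d1 c k x d2] assms by (auto simp: delta_chain_on_def)

lemma chain_on_end:
  assumes "delta_chain_on f C d1 c k" "y \<in> C" "dist (c k) y \<le> d2" "d2 \<ge> 0"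
  shows "delta_chain_on f C (d1 + d2) (c(k := y)) k"
  using chain_end_approx[of f d1 c k y d2] assms by (auto simp: delta_chain_on_def)

lemma chain_on_len: "delta_chain_on f C d c k \<Longrightarrow> k \<ge> 1"
  by (simp add: delta_chain_on_def delta_chain_def)

lemma chain_on_pt: "delta_chain_on f C d c k \<Longrightarrow> i \<le> k \<Longrightarrow> c i \<in> C"
  by (simp add: delta_chain_on_def)

lemma chainK:
  fixes f :: "'a::metric_space \<Rightarrow> 'a"
  assumes cpt: "compact (UNIV :: 'a set)" and cont: "continuous_on UNIV f"
    and C: "C \<in> chain_components f" and g: "\<gamma> > 0"
  shows "\<exists>L0. \<forall>u v L. u \<in> C \<longrightarrow> v \<in> C \<longrightarrow> L \<ge> L0 \<longrightarrow>
    (\<exists>c k. delta_chain_on f C \<gamma> c k \<and> c 0 = u \<and> c k = v \<and> k mod cycle_gcd f C \<gamma> = L mod cycle_gcd f C \<gamma>) \<longrightarrow>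
    (\<exists>c. delta_chain_on f C \<gamma> c L \<and> c 0 = u \<and> c L = v)"
proof -
  let ?m = "cycle_gcd f C \<gamma>"
  have CT: "\<And>x y d. x \<in> C \<Longrightarrow> y \<in> C \<Longrightarrow> d > 0 \<Longrightarrow> \<exists>c k. delta_chain_on f C d c k \<and> c 0 = x \<and> c k = y"
    using comp_CT[OF cpt cont C] by blast
  obtain z where zC: "z \<in> C" using comp_rep[OF C] by blast
  define S where "S = {k. \<exists>c. delta_chain_on f C \<gamma> c k \<and> c 0 = z \<and> c k = z}"
  have Sadd: "a + b \<in> S" if "a \<in> S" "b \<in> S" for a b
    using that chain_cat'[of f C \<gamma>] unfolding S_def by (smt (verit) mem_Collect_eq)
  obtain c0 s0 where "delta_chain_on f C \<gamma> c0 s0" "c0 0 = z" "c0 s0 = z" using CT[OF zC zC g] by blast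
  then have s0: "s0 \<in> S" "s0 > 0" unfolding S_def using chain_on_len by fastforce+
  have GS: "Gcd S = ?m"
  proof (rule dvd_antisym)
    show "Gcd S dvd ?m" unfolding cycle_gcd_def
    proof (rule Gcd_greatest)
      fix l assume "l \<in> {k. \<exists>c. delta_chain_on f C \<gamma> c k \<and> c 0 = c k}"
      then obtain c where c: "delta_chain_on f C \<gamma> c l" "c 0 = c l" by blast
      have wC: "c 0 \<in> C" using chain_on_pt[OF c(1)] by simp
      obtain d a where d: "delta_chain_on f C \<gamma> d a" "d 0 = z" "d a = c 0" using CT[OF zC wC g] by blast
      obtain e b where e: "delta_chain_on f C \<gamma> e b" "e 0 = c 0" "e b = z" using CT[OF wC zC g] by blast
      obtain x1 where x1: "delta_chain_on f C \<gamma> x1 (a + b)" "x1 0 = z" "x1 (a + b) = z"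
        using chain_cat'[OF d(1) e(1)] d e by auto
      obtain x2 where x2: "delta_chain_on f C \<gamma> x2 (a + l)" "x2 0 = z" "x2 (a + l) = c 0"
        using chain_cat'[OF d(1) c(1)] d c by auto
      obtain x3 where x3: "delta_chain_on f C \<gamma> x3 (a + l + b)" "x3 0 = z" "x3 (a + l + b) = z"
        using chain_cat'[OF x2(1) e(1)] x2 e by auto
      have "Gcd S dvd a + b" "Gcd S dvd (a + b) + l"
        using x1 x3 unfolding S_def by (auto intro!: Gcd_dvd simp: ac_simps)
      then show "Gcd S dvd l" by (simp add: dvd_add_right_iff)
    qed
    show "?m dvd Gcd S"
      by (rule Gcd_greatest) (auto simp: S_def intro: gcd_dvd_cycle)
  qed
  obtain L1 where L1: "\<forall>L\<ge>L1. Gcd S dvd L \<longrightarrow> L \<in> S" using numsemigroup[OF Sadd s0] by blast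
  have Ccpt: "compact C" by (rule comp_compact[OF C cont cpt])
  have g2: "\<gamma>/2 > 0" using g by simp
  obtain P where P: "\<forall>u\<in>C. \<exists>p\<le>P. \<exists>c. delta_chain_on f C \<gamma> c p \<and> c 0 = u \<and> c p = z"
  proof -
    have "\<exists>P. \<forall>u\<in>C. \<exists>p\<le>P. \<exists>c. delta_chain_on f C \<gamma> c p \<and> c 0 = u \<and> c p = z"
    proof (rule compact_bound[OF Ccpt], intro ballI)
      fix u assume uC: "u \<in> C"
      obtain c p where c: "delta_chain_on f C (\<gamma>/2) c p" "c 0 = u" "c p = z" using CT[OF uC zC g2] by blast
      have "open (f -` ball (f u) (\<gamma>/2))"
        by (rule continuous_open_vimage) (auto simp: cont_isCont[OF cont])
      moreover have "u \<in> f -` ball (f u) (\<gamma>/2)" using g by simp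
      moreover have "\<forall>u'\<in>C \<inter> f -` ball (f u) (\<gamma>/2). \<exists>c. delta_chain_on f C \<gamma> c p \<and> c 0 = u' \<and> c p = z"
      proof
        fix u' assume u': "u' \<in> C \<inter> f -` ball (f u) (\<gamma>/2)"
        have "delta_chain_on f C (\<gamma>/2 + \<gamma>/2) (c(0 := u')) p"
          by (rule chain_on_start[OF c(1)]) (use u' c g in \<open>auto simp: dist_commute\<close>)
        moreover have "p \<ge> 1" using chain_on_len[OF c(1)] .
        ultimately show "\<exists>c. delta_chain_on f C \<gamma> c p \<and> c 0 = u' \<and> c p = z" using c by (intro exI[of _ "c(0 := u')"]) auto
      qed
      ultimately show "\<exists>U p. open U \<and> u \<in> U \<and> (\<forall>u'\<in>C \<inter> U. \<exists>c. delta_chain_on f C \<gamma> c p \<and> c 0 = u' \<and> c p = z)" by blast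
    qed
    then show ?thesis using that by blast
  qed
  obtain Q where Q: "\<forall>v\<in>C. \<exists>q\<le>Q. \<exists>c. delta_chain_on f C \<gamma> c q \<and> c 0 = z \<and> c q = v"
  proof -
    have "\<exists>Q. \<forall>v\<in>C. \<exists>q\<le>Q. \<exists>c. delta_chain_on f C \<gamma> c q \<and> c 0 = z \<and> c q = v"
    proof (rule compact_bound[OF Ccpt], intro ballI)
      fix v assume vC: "v \<in> C"
      obtain c q where c: "delta_chain_on f C (\<gamma>/2) c q" "c 0 = z" "c q = v" using CT[OF zC vC g2] by blast
      have "\<forall>v'\<in>C \<inter> ball v (\<gamma>/2). \<exists>c. delta_chain_on f C \<gamma> c q \<and> c 0 = z \<and> c q = v'"
      proof
        fix v' assume v': "v' \<in> C \<inter> ball v (\<gamma>/2)"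
        have "delta_chain_on f C (\<gamma>/2 + \<gamma>/2) (c(q := v')) q"
          by (rule chain_on_end[OF c(1)]) (use v' c g in \<open>auto simp: dist_commute\<close>)
        moreover have "q \<ge> 1" using chain_on_len[OF c(1)] .
        ultimately show "\<exists>c. delta_chain_on f C \<gamma> c q \<and> c 0 = z \<and> c q = v'" using c by (intro exI[of _ "c(q := v')"]) auto
      qed
      then show "\<exists>U q. open U \<and> v \<in> U \<and> (\<forall>v'\<in>C \<inter> U. \<exists>c. delta_chain_on f C \<gamma> c q \<and> c 0 = z \<and> c q = v')"
        using g by (intro exI[of _ "ball v (\<gamma>/2)"]) auto
    qed
    then show ?thesis using that by blast
  qed
  show ?thesis
  proof (intro exI[of _ "P + Q + L1"] allI impI)
    fix u v L assume uC: "u \<in> C" and vC: "v \<in> C" and L: "L \<ge> P + Q + L1"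
      and "\<exists>c k. delta_chain_on f C \<gamma> c k \<and> c 0 = u \<and> c k = v \<and> k mod ?m = L mod ?m"
    then obtain c k where c: "delta_chain_on f C \<gamma> c k" "c 0 = u" "c k = v" "k mod ?m = L mod ?m" by blast
    obtain p c1 where c1: "p \<le> P" "delta_chain_on f C \<gamma> c1 p" "c1 0 = u" "c1 p = z" using P uC by blast
    obtain q c2 where c2: "q \<le> Q" "delta_chain_on f C \<gamma> c2 q" "c2 0 = z" "c2 q = v" using Q vC by blast
    obtain r c3 where c3: "delta_chain_on f C \<gamma> c3 r" "c3 0 = v" "c3 r = u" using CT[OF vC uC g] by blast
    obtain x1 where x1: "delta_chain_on f C \<gamma> x1 (p + q)" "x1 0 = u" "x1 (p + q) = v"
      using chain_cat'[OF c1(2) c2(2)] c1 c2 by auto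
    obtain x2 where x2: "delta_chain_on f C \<gamma> x2 (p + q + r)" "x2 0 = u" "x2 (p + q + r) = u"
      using chain_cat'[OF x1(1) c3(1)] x1 c3 by auto
    obtain x3 where x3: "delta_chain_on f C \<gamma> x3 (k + r)" "x3 0 = u" "x3 (k + r) = u"
      using chain_cat'[OF c(1) c3(1)] c c3 by auto
    have d1: "?m dvd p + q + r" using gcd_dvd_cycle[OF x2(1)] x2 by simp
    have d2: "?m dvd k + r" using gcd_dvd_cycle[OF x3(1)] x3 by simp
    define s where "s = L - (p + q)"
    have sd: "?m dvd s" unfolding s_def by (rule modarith[OF c(4) d1 d2]) (use L c1 c2 in linarith)
    have "s \<ge> L1" using L c1 c2 unfolding s_def by linarith
    then have "s \<in> S" using L1 sd GS by simp
    then obtain c4 where c4: "delta_chain_on f C \<gamma> c4 s" "c4 0 = z" "c4 s = z" unfolding S_def by blast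
    obtain y1 where y1: "delta_chain_on f C \<gamma> y1 (p + s)" "y1 0 = u" "y1 (p + s) = z"
      using chain_cat'[OF c1(2) c4(1)] c1 c4 by auto
    obtain y2 where y2: "delta_chain_on f C \<gamma> y2 (p + s + q)" "y2 0 = u" "y2 (p + s + q) = v"
      using chain_cat'[OF y1(1) c2(2)] y1 c2 by auto
    have "p + s + q = L" using L c1 c2 unfolding s_def by linarith
    then show "\<exists>c. delta_chain_on f C \<gamma> c L \<and> c 0 = u \<and> c L = v" using y2 by auto
  qed
qed

lemma stable_set_class_iff:
  "x \<in> stable_set_class f C A \<longleftrightarrow> (\<lambda>i. infdist ((f ^^ i) x) C) \<longlonglongrightarrow> 0 \<and>
     (\<forall>\<delta>>0. (\<lambda>i. infdist ((f ^^ i) x) ((f ^^ i) ` class_at f C A \<delta>)) \<longlonglongrightarrow> 0)"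
proof -
  have "\<exists>\<delta>::real. \<delta> > 0" by (intro exI[of _ 1]) simp
  then show ?thesis unfolding stable_set_class_def stable_set_def by auto
qed

lemma ev_less:
  assumes "(X \<longlongrightarrow> (0::real)) sequentially" "e > 0"
  shows "eventually (\<lambda>i. X i < e) sequentially"
  using order_tendstoD(2)[OF assms] .

lemma sandwich0:
  assumes "\<And>i. 0 \<le> X i" "\<And>i. X i \<le> Y i" "(Y \<longlongrightarrow> (0::real)) sequentially"
  shows "(X \<longlongrightarrow> 0) sequentially"
  by (rule tendsto_sandwich[of "\<lambda>_. 0" X sequentially Y]) (use assms in auto)

lemma shadow_point:
  fixes g :: "'b::metric_space \<Rightarrow> 'b"
  assumes cpt: "compact (UNIV :: 'b set)" and cont: "continuous_on UNIV g"
    and C: "C' \<in> chain_components g"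
    and A: "A \<subseteq> C'" "p \<in> A" "\<forall>\<gamma>>0. \<forall>a\<in>A. cyc_rel g C' \<gamma> p a"
    and sh: "s_limit_shadowing g"
    and w: "w \<in> stable_set_class g C' A"
    and PC: "\<forall>i. P i \<in> C'" and Perr: "(\<lambda>i. dist (g (P i)) (P (Suc i))) \<longlonglongrightarrow> 0"
    and Pcl: "\<forall>\<gamma>>0. (\<lambda>i. infdist (P i) ((g ^^ i) ` class_at g C' A \<gamma>)) \<longlonglongrightarrow> 0"
    and \<epsilon>: "\<epsilon> > 0"
  shows "\<exists>y. dist y w < \<epsilon> \<and> (\<lambda>i. dist ((g ^^ i) y) (P i)) \<longlonglongrightarrow> 0 \<and> y \<in> stable_set_class g C' A"
proof -
  obtain \<delta>s where \<delta>s: "\<delta>s > 0" "\<And>y::nat \<Rightarrow> 'b. (\<forall>i. dist (g (y i)) (y (Suc i)) \<le> \<delta>s) \<and> (\<lambda>i. dist (g (y i)) (y (Suc i))) \<longlonglongrightarrow> 0 \<Longrightarrow>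
     (\<exists>z. (\<forall>i. dist ((g ^^ i) z) (y i) \<le> \<epsilon>/2) \<and> (\<lambda>i. dist ((g ^^ i) z) (y i)) \<longlonglongrightarrow> 0)"
    using sh \<epsilon> unfolding s_limit_shadowing_def by (meson half_gt_zero)
  define \<gamma> where "\<gamma> = \<delta>s / 2"
  have \<gamma>: "\<gamma> > 0" using \<delta>s by (simp add: \<gamma>_def)
  let ?m = "cycle_gcd g C' \<gamma>"
  define E where "E = class_at g C' A \<gamma>"
  have Eeq: "E = {y. cyc_rel g C' \<gamma> p y}" unfolding E_def
    by (rule class_at_eq[OF cpt cont C \<gamma> A(2)]) (use A(3) \<gamma> in blast)
  have pC: "p \<in> C'" using A by blast
  have pE: "p \<in> E" using Eeq cyc_refl[OF cpt cont C pC \<gamma>] by simp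
  have EC: "E \<subseteq> C'" using Eeq by (auto simp: cyc_rel_def)
  have CT: "\<And>x y d. x \<in> C' \<Longrightarrow> y \<in> C' \<Longrightarrow> d > 0 \<Longrightarrow> \<exists>c k. delta_chain_on g C' d c k \<and> c 0 = x \<and> c k = y"
    using comp_CT[OF cpt cont C] by blast
  obtain L0 where L0: "\<And>u v L. u \<in> C' \<Longrightarrow> v \<in> C' \<Longrightarrow> L \<ge> L0 \<Longrightarrow>
    (\<exists>c k. delta_chain_on g C' \<gamma> c k \<and> c 0 = u \<and> c k = v \<and> k mod ?m = L mod ?m) \<Longrightarrow>
    (\<exists>c. delta_chain_on g C' \<gamma> c L \<and> c 0 = u \<and> c L = v)"
    using chainK[OF cpt cont C \<gamma>] by blast
  have wcl: "(\<lambda>i. infdist ((g ^^ i) w) ((g ^^ i) ` E)) \<longlonglongrightarrow> 0"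
    using w \<gamma> unfolding stable_set_class_iff E_def by blast
  obtain N0 where N0: "\<And>i. i \<ge> N0 \<Longrightarrow> infdist ((g ^^ i) w) ((g ^^ i) ` E) < \<gamma>"
    using ev_less[OF wcl \<gamma>] unfolding eventually_sequentially by blast
  define N where "N = Suc N0"
  have N1: "N \<ge> 1" by (simp add: N_def)
  obtain a' where a': "a' \<in> (g ^^ N) ` E" "dist ((g ^^ N) w) a' < \<gamma>"
    using infdist_lessE[of "(g ^^ N) ` E" "(g ^^ N) w" \<gamma>] N0[of N] pE by (auto simp: N_def)
  then obtain a where aE: "a \<in> E" and a: "dist ((g ^^ N) w) ((g ^^ N) a) < \<gamma>" by blast
  have "eventually (\<lambda>i. dist (g (P i)) (P (Suc i)) < \<delta>s \<and> infdist (P i) ((g ^^ i) ` E) < \<gamma>) sequentially"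
    using ev_less[OF Perr \<delta>s(1)] ev_less[OF Pcl[rule_format, OF \<gamma>, folded E_def] \<gamma>] by eventually_elim auto
  then obtain M where M: "\<And>i. i \<ge> M \<Longrightarrow> dist (g (P i)) (P (Suc i)) < \<delta>s \<and> infdist (P i) ((g ^^ i) ` E) < \<gamma>"
    unfolding eventually_sequentially by blast
  define T where "T = N + L0 + M + 1"
  have TN: "T > N" "T - N \<ge> L0" "T \<ge> M" by (auto simp: T_def)
  obtain b' where b': "b' \<in> (g ^^ T) ` E" "dist (P T) b' < \<gamma>"
    using infdist_lessE[of "(g ^^ T) ` E" "P T" \<gamma>] M[of T] TN pE by auto
  then obtain b where bE: "b \<in> E" and b: "dist (P T) ((g ^^ T) b) < \<gamma>" by blast
  define u where "u = (g ^^ N) a"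
  define v where "v = (g ^^ T) b"
  have aC: "a \<in> C'" and bC: "b \<in> C'" using aE bE EC by auto
  have uC: "u \<in> C'" unfolding u_def by (rule comp_iter[OF C cont aC])
  have vC: "v \<in> C'" unfolding v_def by (rule comp_iter[OF C cont bC])
  \<comment> \<open>a chain from u to v with the right length modulo m\<close>
  obtain c1 p1 where c1: "delta_chain_on g C' \<gamma> c1 p1" "c1 0 = u" "c1 p1 = a" using CT[OF uC aC \<gamma>] by blast
  have orbA: "delta_chain_on g C' \<gamma> (\<lambda>i. (g ^^ i) a) N" by (rule orbit_chain_on[OF C cont aC N1]) (use \<gamma> in simp)
  obtain x1 where x1: "delta_chain_on g C' \<gamma> x1 (N + p1)" "x1 0 = a" "x1 (N + p1) = a"
    using chain_cat'[OF orbA c1(1)] c1 by (auto simp: u_def)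
  have d1: "?m dvd N + p1" using gcd_dvd_cycle[OF x1(1)] x1 by simp
  have "cyc_rel g C' \<gamma> p a" "cyc_rel g C' \<gamma> p b" using aE bE Eeq by auto
  then have "cyc_rel g C' \<gamma> a b" using cyc_sym[OF cpt cont C \<gamma>] cyc_trans by metis
  then obtain c2 k where c2: "delta_chain_on g C' \<gamma> c2 k" "c2 0 = a" "c2 k = b" "?m dvd k" unfolding cyc_rel_def by blast
  have T1: "T \<ge> 1" using TN by simp
  have orbB: "delta_chain_on g C' \<gamma> (\<lambda>i. (g ^^ i) b) T" by (rule orbit_chain_on[OF C cont bC T1]) (use \<gamma> in simp)
  obtain x2 where x2: "delta_chain_on g C' \<gamma> x2 (p1 + k)" "x2 0 = u" "x2 (p1 + k) = b"
    using chain_cat'[OF c1(1) c2(1)] c1 c2 by auto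
  obtain x3 where x3: "delta_chain_on g C' \<gamma> x3 (p1 + k + T)" "x3 0 = u" "x3 (p1 + k + T) = v"
    using chain_cat'[OF x2(1) orbB] x2 by (auto simp: v_def)
  have modeq: "(p1 + k + T) mod ?m = (T - N) mod ?m"
  proof -
    obtain x y where "N + p1 = ?m * x" "k = ?m * y" using d1 c2(4) by (auto simp: dvd_def)
    then have "p1 + k + T = (T - N) + ?m * (x + y)" using TN by (simp add: algebra_simps)
    then show ?thesis by simp
  qed
  obtain e where e: "delta_chain_on g C' \<gamma> e (T - N)" "e 0 = u" "e (T - N) = v"
    using L0[OF uC vC TN(2)] x3 modeq by blast
  define Q where "Q i = (if i < N then (g ^^ i) w else if i < T then e (i - N) else P i)" for i
  have Qerr: "dist (g (Q i)) (Q (Suc i)) \<le> \<delta>s" for i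
  proof -
    consider "Suc i < N" | "Suc i = N" | "N \<le> i" "Suc i < T" | "Suc i = T" | "T \<le> i" using TN by linarith
    then show ?thesis
    proof cases
      case 1 then show ?thesis using \<delta>s by (simp add: Q_def)
    next
      case 2
      then have "Q i = (g ^^ i) w" "Q (Suc i) = u" using TN e by (auto simp: Q_def)
      moreover have "g ((g ^^ i) w) = (g ^^ N) w" using 2 by (metis funpow.simps(2) o_apply)
      ultimately show ?thesis using a \<gamma>_def \<delta>s by (simp add: u_def)
    next
      case 3
      then have "Q i = e (i - N)" "Q (Suc i) = e (Suc (i - N))" by (auto simp: Q_def Suc_diff_le)
      moreover have "i - N < T - N" using 3 by simp
      ultimately show ?thesis using e(1) \<gamma>_def \<delta>s unfolding delta_chain_on_def delta_chain_def by auto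
    next
      case 4
      then have iN: "N \<le> i" using TN by simp
      have "Q i = e (i - N)" "Q (Suc i) = P T" using 4 iN by (auto simp: Q_def)
      moreover have "Suc (i - N) = T - N" "i - N < T - N" using 4 iN by auto
      then have "dist (g (e (i - N))) (e (T - N)) \<le> \<gamma>" using e(1) unfolding delta_chain_on_def delta_chain_def by metis
      moreover have "dist (g (e (i - N))) (P T) \<le> dist (g (e (i - N))) (e (T - N)) + dist (e (T - N)) (P T)"
        by (rule dist_triangle)
      moreover have "dist (e (T - N)) (P T) < \<gamma>" using b e(3) by (simp add: v_def dist_commute)
      ultimately show ?thesis by (simp add: \<gamma>_def)
    next
      case 5
      then have "Q i = P i" "Q (Suc i) = P (Suc i)" using TN by (auto simp: Q_def)
      then show ?thesis using M[of i] 5 TN by auto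
    qed
  qed
  have evQ: "eventually (\<lambda>i. Q i = P i \<and> Q (Suc i) = P (Suc i)) sequentially"
    unfolding eventually_sequentially using TN by (intro exI[of _ T]) (auto simp: Q_def)
  have Qlim: "(\<lambda>i. dist (g (Q i)) (Q (Suc i))) \<longlonglongrightarrow> 0"
    using Perr by (rule Lim_transform_eventually) (use evQ in \<open>auto elim: eventually_mono\<close>)
  obtain z where z: "\<forall>i. dist ((g ^^ i) z) (Q i) \<le> \<epsilon>/2" "(\<lambda>i. dist ((g ^^ i) z) (Q i)) \<longlonglongrightarrow> 0"
    using \<delta>s(2)[of Q] Qerr Qlim by blast
  have "dist z w < \<epsilon>" using z(1)[rule_format, of 0] N1 \<epsilon> by (simp add: Q_def)
  moreover have zP: "(\<lambda>i. dist ((g ^^ i) z) (P i)) \<longlonglongrightarrow> 0"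
    using z(2) by (rule Lim_transform_eventually) (use evQ in \<open>auto elim: eventually_mono\<close>)
  moreover have "z \<in> stable_set_class g C' A"
    unfolding stable_set_class_iff
  proof (intro conjI allI impI)
    show "(\<lambda>i. infdist ((g ^^ i) z) C') \<longlonglongrightarrow> 0"
      by (rule sandwich0[OF infdist_nonneg _ zP]) (use PC in \<open>auto intro: infdist_le\<close>)
  next
    fix \<delta> :: real assume "\<delta> > 0"
    then have lim: "(\<lambda>i. infdist (P i) ((g ^^ i) ` class_at g C' A \<delta>) + dist ((g ^^ i) z) (P i)) \<longlonglongrightarrow> 0"
      using tendsto_add[OF Pcl[rule_format] zP] by simp
    show "(\<lambda>i. infdist ((g ^^ i) z) ((g ^^ i) ` class_at g C' A \<delta>)) \<longlonglongrightarrow> 0"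
      by (rule sandwich0[OF infdist_nonneg infdist_triangle lim])
  qed
  ultimately show ?thesis by blast
qed

lemma dist4: "dist a d \<le> dist a b + dist b c + dist c d"
proof -
  have "dist a d \<le> dist a c + dist c d" by (rule dist_triangle)
  moreover have "dist a c \<le> dist a b + dist b c" by (rule dist_triangle)
  ultimately show ?thesis by linarith
qed

lemma approx_pts:
  assumes "\<And>i. A i \<noteq> {}" "(\<lambda>i. infdist (X i) (A i)) \<longlonglongrightarrow> 0"
  shows "\<exists>c. (\<forall>i. c i \<in> A i) \<and> (\<lambda>i. dist (X i) (c i)) \<longlonglongrightarrow> 0"
proof -
  have "\<forall>i. \<exists>a. a \<in> A i \<and> dist (X i) a < infdist (X i) (A i) + inverse (real (Suc i))"
  proof
    fix i
    have "infdist (X i) (A i) < infdist (X i) (A i) + inverse (real (Suc i))" by simp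
    then show "\<exists>a. a \<in> A i \<and> dist (X i) a < infdist (X i) (A i) + inverse (real (Suc i))"
      using infdist_lessE[OF assms(1)] by metis
  qed
  then obtain c where c: "\<And>i. c i \<in> A i" "\<And>i. dist (X i) (c i) < infdist (X i) (A i) + inverse (real (Suc i))"
    by metis
  have lim: "(\<lambda>i. infdist (X i) (A i) + inverse (real (Suc i))) \<longlonglongrightarrow> 0"
    using tendsto_add[OF assms(2) LIMSEQ_inverse_real_of_nat] by simp
  have le: "\<And>i. dist (X i) (c i) \<le> infdist (X i) (A i) + inverse (real (Suc i))" using c(2) less_imp_le by blast
  have "(\<lambda>i. dist (X i) (c i)) \<longlonglongrightarrow> 0"
    using sandwich0[of "\<lambda>i. dist (X i) (c i)" "\<lambda>i. infdist (X i) (A i) + inverse (real (Suc i))", OF zero_le_dist le lim] .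
  then show ?thesis using c(1) by blast
qed

lemma UC_lim:
  assumes "uniformly_continuous_on S h" "\<And>i. u i \<in> S" "\<And>i. v i \<in> S" "(\<lambda>i. dist (u i) (v i)) \<longlonglongrightarrow> 0"
  shows "(\<lambda>i. dist (h (u i)) (h (v i))) \<longlonglongrightarrow> 0"
proof (rule tendstoI)
  fix e :: real assume e: "e > 0"
  obtain d where d: "d > 0" "\<And>x x'. x \<in> S \<Longrightarrow> x' \<in> S \<Longrightarrow> dist x' x < d \<Longrightarrow> dist (h x') (h x) < e"
    using assms(1) e unfolding uniformly_continuous_on_def by metis
  have "eventually (\<lambda>i. dist (u i) (v i) < d) sequentially" using ev_less[OF assms(4) d(1)] .
  then show "eventually (\<lambda>i. dist (dist (h (u i)) (h (v i))) 0 < e) sequentially"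
  proof eventually_elim
    case (elim i)
    then show ?case using d(2)[of "v i" "u i"] assms(2,3) by (simp add: dist_commute)
  qed
qed

lemma comm_iter:
  assumes "\<forall>x\<in>C. h (f x) = g (h x)" "\<And>x. x \<in> C \<Longrightarrow> f x \<in> C" "d \<in> C"
  shows "h ((f ^^ i) d) = (g ^^ i) (h d) \<and> (f ^^ i) d \<in> C"
  by (induction i) (use assms in auto)

lemma H_cyc:
  fixes f :: "'a::metric_space \<Rightarrow> 'a" and g :: "'b::metric_space \<Rightarrow> 'b"
  assumes uc: "uniformly_continuous_on C h" and hC: "h ` C \<subseteq> C'"
    and comm: "\<forall>x\<in>C. h (f x) = g (h x)" and finv: "\<And>x. x \<in> C \<Longrightarrow> f x \<in> C" and \<gamma>: "\<gamma> > 0"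
  shows "\<exists>\<gamma>f>0. \<forall>a b. cyc_rel f C \<gamma>f a b \<longrightarrow> cyc_rel g C' \<gamma> (h a) (h b)"
proof -
  obtain r where r: "r > 0" "\<And>x x'. x \<in> C \<Longrightarrow> x' \<in> C \<Longrightarrow> dist x' x < r \<Longrightarrow> dist (h x') (h x) < \<gamma>"
    using uc \<gamma> unfolding uniformly_continuous_on_def by metis
  define \<gamma>f where "\<gamma>f = r / 2"
  have \<gamma>f: "\<gamma>f > 0" using r by (simp add: \<gamma>f_def)
  have cm: "delta_chain_on g C' \<gamma> (h \<circ> c) k" if c: "delta_chain_on f C \<gamma>f c k" for c k
    unfolding delta_chain_on_def delta_chain_def
  proof (intro conjI allI impI)
    show "1 \<le> k" using c by (simp add: delta_chain_on_def delta_chain_def)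
    fix i assume i: "i < k"
    have ci: "c i \<in> C" "c (Suc i) \<in> C" using c i by (auto simp: delta_chain_on_def)
    have "dist (f (c i)) (c (Suc i)) \<le> \<gamma>f" using c i by (auto simp: delta_chain_on_def delta_chain_def)
    then have "dist (h (f (c i))) (h (c (Suc i))) < \<gamma>" using r(2)[of "c (Suc i)" "f (c i)"] ci finv \<gamma>f_def r
      by (simp add: dist_commute)
    then show "dist (g ((h \<circ> c) i)) ((h \<circ> c) (Suc i)) \<le> \<gamma>" using comm ci by simp
  next
    fix i assume "i \<le> k" then show "(h \<circ> c) i \<in> C'" using c hC by (auto simp: delta_chain_on_def)
  qed
  have md: "cycle_gcd g C' \<gamma> dvd cycle_gcd f C \<gamma>f"
    unfolding cycle_gcd_def[of f]
  proof (rule Gcd_greatest)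
    fix l assume "l \<in> {k. \<exists>c. delta_chain_on f C \<gamma>f c k \<and> c 0 = c k}"
    then obtain c where "delta_chain_on f C \<gamma>f c l" "c 0 = c l" by blast
    then show "cycle_gcd g C' \<gamma> dvd l" using gcd_dvd_cycle[OF cm] by simp
  qed
  show ?thesis
  proof (intro exI[of _ \<gamma>f] conjI allI impI \<gamma>f)
    fix a b assume "cyc_rel f C \<gamma>f a b"
    then obtain c k where c: "a \<in> C" "b \<in> C" "delta_chain_on f C \<gamma>f c k" "c 0 = a" "c k = b" "cycle_gcd f C \<gamma>f dvd k"
      unfolding cyc_rel_def by blast
    show "cyc_rel g C' \<gamma> (h a) (h b)" unfolding cyc_rel_def
      using c hC cm[OF c(3)] dvd_trans[OF md c(6)] by (intro conjI exI[of _ "h \<circ> c"] exI[of _ k]) auto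
  qed
qed

theorem corollary1p1:
  fixes f :: "'a::metric_space \<Rightarrow> 'a" and g :: "'b::metric_space \<Rightarrow> 'b"
    and C D :: "'a set" and C' :: "'b set" and h :: "'a \<Rightarrow> 'b"
    and \<F> \<G> :: "nat set set" and n :: nat and \<delta> :: real
  assumes "compact (UNIV :: 'a set)" and "compact (UNIV :: 'b set)"
    and "continuous_on UNIV f" and "continuous_on UNIV g"
    and "C \<in> chain_components f" and "D \<in> cyc_classes_lim f C"
    and "C' \<in> chain_components g"
    and "\<exists>k. homeomorphism C C' h k"
    and "\<forall>x\<in>C. h (f x) = g (h x)"
    and "full_family \<F>" and "full_family \<G>"
    and "n \<ge> 2" and "\<delta> > 0"
    and "s_limit_shadowing g"
    and "dense_chaotic \<F> \<G> f n \<delta> (stable_set_class f C D)"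
  shows "\<exists>\<delta>'>0. dense_chaotic \<F> \<G> g n \<delta>' (stable_set_class g C' (h ` D))"
proof -
  note cptX = assms(1) and cptY = assms(2) and contf = assms(3) and contg = assms(4)
    and C = assms(5) and Dc = assms(6) and C' = assms(7) and comm = assms(9)
    and FF = assms(10) and GG = assms(11) and \<delta> = assms(13) and sh = assms(14) and dc = assms(15)
  obtain k where hk: "homeomorphism C C' h k" using assms(8) by blast
  have kh: "\<And>x. x \<in> C \<Longrightarrow> k (h x) = x" and hC: "h ` C = C'" and hcont: "continuous_on C h"
    and kcont: "continuous_on C' k"
    using hk unfolding homeomorphism_def by auto
  have CcX: "compact C" by (rule comp_compact[OF C contf cptX])
  have CcY: "compact C'" by (rule comp_compact[OF C' contg cptY])
  have ucH: "uniformly_continuous_on C h" by (rule compact_uniformly_continuous[OF hcont CcX])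
  have ucK: "uniformly_continuous_on C' k" by (rule compact_uniformly_continuous[OF kcont CcY])
  have ucF: "uniformly_continuous_on UNIV f" by (rule compact_uniformly_continuous[OF contf cptX])
  have finv: "\<And>x. x \<in> C \<Longrightarrow> f x \<in> C" using comp_inv[OF C contf] by blast
  obtain x0 where x0C: "x0 \<in> C" and Deq: "D = {y. cyc_rel_lim f C x0 y}"
    using Dc unfolding cyc_classes_lim_def by blast
  have x0D: "x0 \<in> D" using Deq cyc_refl[OF cptX contf C x0C] by (simp add: cyc_rel_lim_def)
  have DC: "D \<subseteq> C"
  proof
    fix y assume "y \<in> D"
    then have "cyc_rel f C 1 x0 y" using Deq by (simp add: cyc_rel_lim_def)
    then show "y \<in> C" by (simp add: cyc_rel_def)
  qed
  define A where "A = h ` D"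
  have AC: "A \<subseteq> C'" using DC hC by (auto simp: A_def)
  have pA: "h x0 \<in> A" using x0D by (simp add: A_def)
  have Acyc: "\<forall>\<gamma>>0. \<forall>a\<in>A. cyc_rel g C' \<gamma> (h x0) a"
  proof (intro allI impI ballI)
    fix \<gamma> :: real and a assume \<gamma>: "\<gamma> > 0" and a: "a \<in> A"
    obtain \<gamma>f where \<gamma>f: "\<gamma>f > 0" "\<forall>a b. cyc_rel f C \<gamma>f a b \<longrightarrow> cyc_rel g C' \<gamma> (h a) (h b)"
      using H_cyc[OF ucH _ comm finv \<gamma>] hC by blast
    obtain d where "d \<in> D" "a = h d" using a by (auto simp: A_def)
    then show "cyc_rel g C' \<gamma> (h x0) a" using \<gamma>f Deq by (auto simp: cyc_rel_lim_def)
  qed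
  have Dclass: "class_at f C D \<gamma> = {y. cyc_rel f C \<gamma> x0 y}" if "\<gamma> > 0" for \<gamma>
    by (rule class_at_eq[OF cptX contf C that x0D]) (use Deq that in \<open>auto simp: cyc_rel_lim_def\<close>)
  have Aclass: "class_at g C' A \<gamma> = {y. cyc_rel g C' \<gamma> (h x0) y}" if "\<gamma> > 0" for \<gamma>
    by (rule class_at_eq[OF cptY contg C' that pA]) (use Acyc that in blast)
  have incl: "\<exists>\<gamma>f>0. h ` class_at f C D \<gamma>f \<subseteq> class_at g C' A \<gamma>" if \<gamma>: "\<gamma> > 0" for \<gamma>
  proof -
    obtain \<gamma>f where \<gamma>f: "\<gamma>f > 0" "\<forall>a b. cyc_rel f C \<gamma>f a b \<longrightarrow> cyc_rel g C' \<gamma> (h a) (h b)"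
      using H_cyc[OF ucH _ comm finv \<gamma>] hC by blast
    then show ?thesis using Dclass[OF \<gamma>f(1)] Aclass[OF \<gamma>] by (intro exI[of _ \<gamma>f]) auto
  qed
  have Dne: "class_at f C D \<gamma> \<noteq> {}" "class_at f C D \<gamma> \<subseteq> C" if "\<gamma> > 0" for \<gamma>
    using Dclass[OF that] cyc_refl[OF cptX contf C x0C that] by (auto simp: cyc_rel_def)
  let ?V = "stable_set_class f C D"
  let ?V' = "stable_set_class g C' A"
  obtain z0 where z0: "z0 \<in> ?V" using dc unfolding dense_chaotic_def by blast
  have "\<exists>x. (\<forall>j<n. x j \<in> ?V) \<and> scrambled \<F> \<G> f n \<delta> x \<and> (\<forall>j<n. dist (x j) ((\<lambda>_. z0) j) < 1)"
  proof -
    have d2: "\<forall>z. (\<forall>j<n. z j \<in> ?V) \<longrightarrow> (\<forall>\<epsilon>>0. \<exists>x. (\<forall>j<n. x j \<in> ?V) \<and> scrambled \<F> \<G> f n \<delta> x \<and> (\<forall>j<n. dist (x j) (z j) < \<epsilon>))"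
      using dc unfolding dense_chaotic_def by blast
    show ?thesis using d2[rule_format, of "\<lambda>_. z0" 1] z0 by simp
  qed
  then obtain x where xV: "\<forall>j<n. x j \<in> ?V" and xs: "scrambled \<F> \<G> f n \<delta> x" by blast
  have "\<forall>j. \<exists>c. j < n \<longrightarrow> (\<forall>i. c i \<in> C) \<and> (\<lambda>i. dist ((f ^^ i) (x j)) (c i)) \<longlonglongrightarrow> 0"
  proof (intro allI)
    fix j
    show "\<exists>c. j < n \<longrightarrow> (\<forall>i. c i \<in> C) \<and> (\<lambda>i. dist ((f ^^ i) (x j)) (c i)) \<longlonglongrightarrow> 0"
    proof (cases "j < n")
      case True
      then have "(\<lambda>i. infdist ((f ^^ i) (x j)) C) \<longlonglongrightarrow> 0" using xV unfolding stable_set_class_iff by blast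
      then show ?thesis using approx_pts[of "\<lambda>_. C" "\<lambda>i. (f ^^ i) (x j)"] x0C by blast
    qed simp
  qed
  then obtain cc where cc: "\<And>j. j < n \<Longrightarrow> (\<forall>i. cc j i \<in> C) \<and> (\<lambda>i. dist ((f ^^ i) (x j)) (cc j i)) \<longlonglongrightarrow> 0"
    by metis
  define P where "P j i = h (cc j i)" for j i
  have PC: "\<forall>i. P j i \<in> C'" if "j < n" for j using cc[OF that] hC by (auto simp: P_def)
  have Perr: "(\<lambda>i. dist (g (P j i)) (P j (Suc i))) \<longlonglongrightarrow> 0" if j: "j < n" for j
  proof -
    have c1: "\<And>i. cc j i \<in> C" and c2: "(\<lambda>i. dist ((f ^^ i) (x j)) (cc j i)) \<longlonglongrightarrow> 0" using cc[OF j] by auto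
    have l1: "(\<lambda>i. dist (f (cc j i)) (f ((f ^^ i) (x j)))) \<longlonglongrightarrow> 0"
      by (rule UC_lim[OF ucF]) (use c2 in \<open>auto simp: dist_commute\<close>)
    have l2: "(\<lambda>i. dist (f ((f ^^ i) (x j))) (cc j (Suc i))) \<longlonglongrightarrow> 0"
      using LIMSEQ_Suc[OF c2] by simp
    have le: "dist (f (cc j i)) (cc j (Suc i)) \<le> dist (f (cc j i)) (f ((f ^^ i) (x j))) + dist (f ((f ^^ i) (x j))) (cc j (Suc i))" for i
      by (rule dist_triangle)
    have "(\<lambda>i. dist (f (cc j i)) (cc j (Suc i))) \<longlonglongrightarrow> 0"
      using sandwich0[of "\<lambda>i. dist (f (cc j i)) (cc j (Suc i))", OF zero_le_dist le tendsto_add[OF l1 l2, simplified]] .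
    then have "(\<lambda>i. dist (h (f (cc j i))) (h (cc j (Suc i)))) \<longlonglongrightarrow> 0"
      using UC_lim[OF ucH, of "\<lambda>i. f (cc j i)" "\<lambda>i. cc j (Suc i)"] c1 finv by blast
    then show ?thesis using comm c1 by (simp add: P_def)
  qed
  have Pcl: "\<forall>\<gamma>>0. (\<lambda>i. infdist (P j i) ((g ^^ i) ` class_at g C' A \<gamma>)) \<longlonglongrightarrow> 0" if j: "j < n" for j
  proof (intro allI impI)
    fix \<gamma> :: real assume \<gamma>: "\<gamma> > 0"
    obtain \<gamma>f where \<gamma>f: "\<gamma>f > 0" "h ` class_at f C D \<gamma>f \<subseteq> class_at g C' A \<gamma>" using incl[OF \<gamma>] by blast
    let ?Df = "class_at f C D \<gamma>f"
    have c1: "\<And>i. cc j i \<in> C" and c2: "(\<lambda>i. dist ((f ^^ i) (x j)) (cc j i)) \<longlonglongrightarrow> 0" using cc[OF j] by auto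
    have "(\<lambda>i. infdist ((f ^^ i) (x j)) ((f ^^ i) ` ?Df)) \<longlonglongrightarrow> 0" using xV j \<gamma>f unfolding stable_set_class_iff by blast
    moreover have ne: "\<And>i. (f ^^ i) ` ?Df \<noteq> {}" using Dne(1)[OF \<gamma>f(1)] by simp
    ultimately obtain \<beta> where \<beta>: "\<And>i. \<beta> i \<in> (f ^^ i) ` ?Df" "(\<lambda>i. dist ((f ^^ i) (x j)) (\<beta> i)) \<longlonglongrightarrow> 0"
      using approx_pts[of "\<lambda>i. (f ^^ i) ` ?Df" "\<lambda>i. (f ^^ i) (x j)", OF ne] by blast
    have \<beta>C: "\<beta> i \<in> C" for i
    proof -
      obtain d where d: "d \<in> ?Df" "\<beta> i = (f ^^ i) d" using \<beta>(1)[of i] by blast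
      then have "d \<in> C" using Dne(2)[OF \<gamma>f(1)] by blast
      then show ?thesis using d(2) comp_iter[OF C contf, of d i] by simp
    qed
    have "(\<lambda>i. dist (cc j i) (\<beta> i)) \<longlonglongrightarrow> 0"
    proof -
      have "dist (cc j i) (\<beta> i) \<le> dist ((f ^^ i) (x j)) (cc j i) + dist ((f ^^ i) (x j)) (\<beta> i)" for i
        using dist_triangle[of "cc j i" "\<beta> i" "(f ^^ i) (x j)"] by (simp add: dist_commute)
      then show ?thesis using sandwich0[OF zero_le_dist _ tendsto_add[OF c2 \<beta>(2), simplified]] by blast
    qed
    then have hl: "(\<lambda>i. dist (h (cc j i)) (h (\<beta> i))) \<longlonglongrightarrow> 0" by (rule UC_lim[OF ucH c1 \<beta>C])
    have "h (\<beta> i) \<in> (g ^^ i) ` class_at g C' A \<gamma>" for i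
    proof -
      obtain d where d: "d \<in> ?Df" "\<beta> i = (f ^^ i) d" using \<beta>(1)[of i] by blast
      have "h ((f ^^ i) d) = (g ^^ i) (h d)" using comm_iter[OF comm finv, of d i] d Dne(2)[OF \<gamma>f(1)] by blast
      then show ?thesis using d \<gamma>f(2) by auto
    qed
    then have le: "infdist (P j i) ((g ^^ i) ` class_at g C' A \<gamma>) \<le> dist (h (cc j i)) (h (\<beta> i))" for i
      by (simp add: P_def infdist_le)
    show "(\<lambda>i. infdist (P j i) ((g ^^ i) ` class_at g C' A \<gamma>)) \<longlonglongrightarrow> 0"
      using sandwich0[of "\<lambda>i. infdist (P j i) ((g ^^ i) ` class_at g C' A \<gamma>)" "\<lambda>i. dist (h (cc j i)) (h (\<beta> i))", OF infdist_nonneg le hl] .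
  qed
  obtain \<eta> where \<eta>: "\<eta> > 0" "\<And>u u'. u \<in> C' \<Longrightarrow> u' \<in> C' \<Longrightarrow> dist u' u < \<eta> \<Longrightarrow> dist (k u') (k u) < \<delta>/2"
    using ucK \<delta> unfolding uniformly_continuous_on_def by (metis half_gt_zero)
  have V'ne: "?V' \<noteq> {}"
  proof -
    have "h x0 \<in> ?V'"
      unfolding stable_set_class_iff
    proof (intro conjI allI impI)
      have "(g ^^ i) (h x0) \<in> C'" for i using comp_iter[OF C' contg] AC pA by blast
      then show "(\<lambda>i. infdist ((g ^^ i) (h x0)) C') \<longlonglongrightarrow> 0" by simp
      fix \<gamma> :: real assume "\<gamma> > 0"
      then have "h x0 \<in> class_at g C' A \<gamma>" using Aclass cyc_refl[OF cptY contg C'] AC pA by blast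
      then show "(\<lambda>i. infdist ((g ^^ i) (h x0)) ((g ^^ i) ` class_at g C' A \<gamma>)) \<longlonglongrightarrow> 0" by simp
    qed
    then show ?thesis by blast
  qed
  have "dense_chaotic \<F> \<G> g n (\<eta>/2) ?V'"
    unfolding dense_chaotic_def
  proof (intro conjI V'ne allI impI)
    fix w :: "nat \<Rightarrow> 'b" and \<epsilon> :: real assume w: "\<forall>j<n. w j \<in> ?V'" and \<epsilon>: "\<epsilon> > 0"
    have "\<forall>j. \<exists>y. j < n \<longrightarrow> dist y (w j) < \<epsilon> \<and> (\<lambda>i. dist ((g ^^ i) y) (P j i)) \<longlonglongrightarrow> 0 \<and> y \<in> ?V'"
    proof (intro allI)
      fix j
      show "\<exists>y. j < n \<longrightarrow> dist y (w j) < \<epsilon> \<and> (\<lambda>i. dist ((g ^^ i) y) (P j i)) \<longlonglongrightarrow> 0 \<and> y \<in> ?V'"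
      proof (cases "j < n")
        case True
        then show ?thesis
          using shadow_point[OF cptY contg C' AC pA Acyc sh w[rule_format, OF True] PC[OF True] Perr[OF True] Pcl[OF True] \<epsilon>]
          by blast
      qed simp
    qed
    then obtain Y where Y: "\<And>j. j < n \<Longrightarrow> dist (Y j) (w j) < \<epsilon> \<and> (\<lambda>i. dist ((g ^^ i) (Y j)) (P j i)) \<longlonglongrightarrow> 0 \<and> Y j \<in> ?V'"
      by metis
    have evall: "eventually (\<lambda>i. \<forall>j\<in>{..<n}. dist ((f ^^ i) (x j)) (cc j i) < a \<and> dist ((g ^^ i) (Y j)) (P j i) < b) sequentially"
      if "a > 0" "b > 0" for a b
    proof (rule eventually_ball_finite)
      show "\<forall>j\<in>{..<n}. eventually (\<lambda>i. dist ((f ^^ i) (x j)) (cc j i) < a \<and> dist ((g ^^ i) (Y j)) (P j i) < b) sequentially"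
      proof
        fix j assume "j \<in> {..<n}"
        then have j: "j < n" by simp
        show "eventually (\<lambda>i. dist ((f ^^ i) (x j)) (cc j i) < a \<and> dist ((g ^^ i) (Y j)) (P j i) < b) sequentially"
          using ev_less[OF conjunct2[OF cc[OF j]] that(1)] ev_less[OF conjunct1[OF conjunct2[OF Y[OF j]]] that(2)]
          by eventually_elim auto
      qed
    qed simp
    have Ssc: "S_set g n Y (\<eta>/2) \<in> \<F>"
    proof -
      obtain M where M: "\<And>i j. i \<ge> M \<Longrightarrow> j < n \<Longrightarrow> dist ((f ^^ i) (x j)) (cc j i) < \<delta>/4 \<and> dist ((g ^^ i) (Y j)) (P j i) < \<eta>/8"
      proof -
        have "eventually (\<lambda>i. \<forall>j\<in>{..<n}. dist ((f ^^ i) (x j)) (cc j i) < \<delta>/4 \<and> dist ((g ^^ i) (Y j)) (P j i) < \<eta>/8) sequentially"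
          using evall[of "\<delta>/4" "\<eta>/8"] \<delta>(1) \<eta>(1) by simp
        then obtain M0 where M0: "\<forall>i\<ge>M0. \<forall>j\<in>{..<n}. dist ((f ^^ i) (x j)) (cc j i) < \<delta>/4 \<and> dist ((g ^^ i) (Y j)) (P j i) < \<eta>/8"
          unfolding eventually_sequentially by blast
        show ?thesis using M0 that[of M0] by auto
      qed
      have SF: "S_set f n x \<delta> \<in> \<F>" using xs by (simp add: scrambled_def)
      then have "{i \<in> S_set f n x \<delta>. i \<ge> M} \<in> \<F>" using FF by (simp add: full_family_def)
      moreover have "{i \<in> S_set f n x \<delta>. i \<ge> M} \<subseteq> S_set g n Y (\<eta>/2)"
      proof (intro subsetI)
        fix i assume "i \<in> {i \<in> S_set f n x \<delta>. i \<ge> M}"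
        then have iS: "\<forall>j l. j < l \<and> l < n \<longrightarrow> \<delta> < dist ((f ^^ i) (x j)) ((f ^^ i) (x l))"
          and iM: "M \<le> i" by (auto simp: S_set_def)
        show "i \<in> S_set g n Y (\<eta>/2)" unfolding S_set_def
        proof (intro CollectI allI impI)
        fix j l assume jl0: "j < l \<and> l < n"
        then have jl: "j < l" "l < n" by auto
        have jn: "j < n" using jl by simp
        have mj: "dist ((f ^^ i) (x j)) (cc j i) < \<delta>/4" "dist ((g ^^ i) (Y j)) (P j i) < \<eta>/8" using M[OF iM jn] by auto
        have ml: "dist ((f ^^ i) (x l)) (cc l i) < \<delta>/4" "dist ((g ^^ i) (Y l)) (P l i) < \<eta>/8" using M[OF iM jl(2)] by auto
        have "\<delta> < dist ((f ^^ i) (x j)) ((f ^^ i) (x l))" using iS jl by blast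
        moreover have "dist ((f ^^ i) (x j)) ((f ^^ i) (x l)) \<le> dist ((f ^^ i) (x j)) (cc j i) + dist (cc j i) (cc l i) + dist (cc l i) ((f ^^ i) (x l))"
          by (rule dist4)
        ultimately have cd: "dist (cc j i) (cc l i) \<ge> \<delta>/2" using mj ml by (simp add: dist_commute)
        have "dist (P j i) (P l i) \<ge> \<eta>"
        proof (rule ccontr)
          assume "\<not> ?thesis"
          then have "dist (k (P j i)) (k (P l i)) < \<delta>/2" using \<eta>(2)[of "P l i" "P j i"] PC jn jl(2) by (simp add: dist_commute)
          then show False using cd kh cc jn jl(2) by (simp add: P_def)
        qed
        moreover have "dist (P j i) (P l i) \<le> dist (P j i) ((g ^^ i) (Y j)) + dist ((g ^^ i) (Y j)) ((g ^^ i) (Y l)) + dist ((g ^^ i) (Y l)) (P l i)"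
          by (rule dist4)
        moreover have "dist (P j i) ((g ^^ i) (Y j)) < \<eta>/8" using mj(2) by (simp add: dist_commute)
        ultimately show "\<eta> / 2 < dist ((g ^^ i) (Y j)) ((g ^^ i) (Y l))" using ml(2) \<eta>(1) by linarith
      qed
      qed
      ultimately show ?thesis using FF by (auto simp: full_family_def furstenberg_family_def)
    qed
    have Tsc: "T_set g n Y e \<in> \<G>" if e: "e > 0" for e
    proof -
      obtain r where r: "r > 0" "\<And>c c'. c \<in> C \<Longrightarrow> c' \<in> C \<Longrightarrow> dist c' c < r \<Longrightarrow> dist (h c') (h c) < e/2"
        using ucH e unfolding uniformly_continuous_on_def by (metis half_gt_zero)
      obtain M where M: "\<And>i j. i \<ge> M \<Longrightarrow> j < n \<Longrightarrow> dist ((f ^^ i) (x j)) (cc j i) < r/4 \<and> dist ((g ^^ i) (Y j)) (P j i) < e/4"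
      proof -
        have "eventually (\<lambda>i. \<forall>j\<in>{..<n}. dist ((f ^^ i) (x j)) (cc j i) < r/4 \<and> dist ((g ^^ i) (Y j)) (P j i) < e/4) sequentially"
          using evall[of "r/4" "e/4"] r(1) e(1) by simp
        then obtain M0 where M0: "\<forall>i\<ge>M0. \<forall>j\<in>{..<n}. dist ((f ^^ i) (x j)) (cc j i) < r/4 \<and> dist ((g ^^ i) (Y j)) (P j i) < e/4"
          unfolding eventually_sequentially by blast
        show ?thesis using M0 that[of M0] by auto
      qed
      have "T_set f n x (r/2) \<in> \<G>" using xs r by (simp add: scrambled_def)
      then have "{i \<in> T_set f n x (r/2). i \<ge> M} \<in> \<G>" using GG by (simp add: full_family_def)
      moreover have "{i \<in> T_set f n x (r/2). i \<ge> M} \<subseteq> T_set g n Y e"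
      proof (intro subsetI)
        fix i assume "i \<in> {i \<in> T_set f n x (r/2). i \<ge> M}"
        then have iS: "\<forall>j l. j < l \<and> l < n \<longrightarrow> dist ((f ^^ i) (x j)) ((f ^^ i) (x l)) < r/2"
          and iM: "M \<le> i" by (auto simp: T_set_def)
        show "i \<in> T_set g n Y e" unfolding T_set_def
        proof (intro CollectI allI impI)
        fix j l assume jl0: "j < l \<and> l < n"
        then have jl: "j < l" "l < n" by auto
        have jn: "j < n" using jl by simp
        have mj: "dist ((f ^^ i) (x j)) (cc j i) < r/4" "dist ((g ^^ i) (Y j)) (P j i) < e/4" using M[OF iM jn] by auto
        have ml: "dist ((f ^^ i) (x l)) (cc l i) < r/4" "dist ((g ^^ i) (Y l)) (P l i) < e/4" using M[OF iM jl(2)] by auto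
        have "dist ((f ^^ i) (x j)) ((f ^^ i) (x l)) < r/2" using iS jl by blast
        moreover have "dist (cc j i) (cc l i) \<le> dist (cc j i) ((f ^^ i) (x j)) + dist ((f ^^ i) (x j)) ((f ^^ i) (x l)) + dist ((f ^^ i) (x l)) (cc l i)"
          by (rule dist4)
        ultimately have "dist (cc j i) (cc l i) < r" using mj ml by (simp add: dist_commute)
        then have "dist (P j i) (P l i) < e/2" using r(2)[of "cc l i" "cc j i"] cc jn jl(2) by (simp add: P_def dist_commute)
        moreover have "dist ((g ^^ i) (Y j)) ((g ^^ i) (Y l)) \<le> dist ((g ^^ i) (Y j)) (P j i) + dist (P j i) (P l i) + dist (P l i) ((g ^^ i) (Y l))"
          by (rule dist4)
        ultimately show "dist ((g ^^ i) (Y j)) ((g ^^ i) (Y l)) < e" using mj ml by (simp add: dist_commute)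
      qed
      qed
      ultimately show ?thesis using GG by (auto simp: full_family_def furstenberg_family_def)
    qed
    show "\<exists>y. (\<forall>j<n. y j \<in> ?V') \<and> scrambled \<F> \<G> g n (\<eta>/2) y \<and> (\<forall>j<n. dist (y j) (w j) < \<epsilon>)"
      using Y Ssc Tsc by (intro exI[of _ Y]) (auto simp: scrambled_def)
  qed
  then show ?thesis using \<eta>(1) unfolding A_def by (intro exI[of _ "\<eta>/2"]) auto
qed

end
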